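(* Consider the two-regime Gaussian non-homogeneous Markov-switching AR model described in the context, with a fixed parameter $\theta\in\tilde\Theta$. Then the Markov chain $(X_k,Y_{k-s+1}^k)_k$ on $\{1,2\}\times\mathbb R^s$ is $\psi$-irreducible with $\psi=\mu$. Moreover, for every $R>0$, the set $E_R:=\{(x,y_{-s+1}^0)\in\{1,2\}\times\mathbb R^s:\ \|y_{-s+1}^0\|\le R\}$ is $\nu_s$-small and $\nu_{s+1}$-small for some measures $\nu_s$ and $\nu_{s+1}$ equivalent to $\mu$; hence the Markov chain is aperiodic.
   Context: Let $s\ge1$ and $1\le r\le s$ be integers, $E=\{1,2\}$ with counting measure, $K=\mathbb R$ with Lebesgue measure, $\mu$ the product of counting measure on $\{1,2\}$ and Lebesgue measure on $\mathbb R^s$, and $\|\cdot\|$ a norm on $\mathbb R^s$. The process $(X_k,Y_k)_k$ on $\{1,2\}\times\mathbb R$ satisfies $Y_k=\beta_0^{(X_k)}+\sum_{\ell=1}^s\beta_\ell^{(X_k)}Y_{k-\ell}+\sigma^{(X_k)}\epsilon_k$ with $(\epsilon_k)$ iid standard Gaussian (independent of the past), i.e. the conditional density of $Y_k$ given the past and $X_k=x$ is the Gaussian density with mean $\beta_0^{(x)}+\sum_{\ell=1}^s\beta_\ell^{(x)}y_{k-\ell}$ and standard deviation $\sigma^{(x)}$; and, conditionally on the past, $X_k$ depends only on $X_{k-1}$ and $Y_{k-s}^{k-1}$ with $P(X_k=x|X_{k-1}=x,Y_{k-s}^{k-1}=y_{k-s}^{k-1})=\pi_-^{(x)}+\frac{1-\pi_-^{(x)}-\pi_+^{(x)}}{1+\exp(\lambda_0^{(x)}+\lambda_1^{(x)}y_{k-r})}$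 and the probability of switching to the other state equal to one minus this. The parameter is $\theta=((\beta_i^{(x)}),(\sigma^{(x)}),(\pi_-^{(x)}),(\pi_+^{(x)}),(\lambda_i^{(x)}))$, with $\beta_i^{(x)},\lambda_i^{(x)}\in\mathbb R$, and $\tilde\Theta$ is the set of such $\theta$ with, for every $x\in\{1,2\}$, $\sigma^{(x)}>0$ and $0<\pi_-^{(x)}<1-\pi_+^{(x)}<1$. *)

theory Defs
  imports "HOL-Probability.Probability"
begin

text \<open>States are pairs (x, y) with regime x in {1,2} and the window
  y = (y_{-s+1}, ..., y_0) stored as an extensional function on {..<s} with
  y i = y_{-s+1+i}; hence the lag-l value Y_{k-l} (l = 1..s) used to generate Y_k
  is y (s - l) when the current state is the window ending at time k-1.\<close>

record msar_param =
  ms_beta :: "nat \<Rightarrow> nat \<Rightarrow> real"   (* ms_beta x i = beta_i^(x), i = 0..s *)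
  ms_sigma :: "nat \<Rightarrow> real"
  ms_pim :: "nat \<Rightarrow> real"
  ms_pip :: "nat \<Rightarrow> real"
  ms_lam0 :: "nat \<Rightarrow> real"
  ms_lam1 :: "nat \<Rightarrow> real"

definition theta_tilde :: "msar_param set" where
  "theta_tilde = {\<theta>. \<forall>x\<in>{1,2::nat}. ms_sigma \<theta> x > 0 \<and> 0 < ms_pim \<theta> x
       \<and> ms_pim \<theta> x < 1 - ms_pip \<theta> x \<and> 1 - ms_pip \<theta> x < 1}"

definition Rs :: "nat \<Rightarrow> (nat \<Rightarrow> real) measure" where
  "Rs s = (\<Pi>\<^sub>M i\<in>{..<s}. lborel)"

text \<open>The reference measure mu on {1,2} x R^s.\<close>
definition state_space :: "nat \<Rightarrow> (nat \<times> (nat \<Rightarrow> real)) measure" where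
  "state_space s = count_space {1,2} \<Otimes>\<^sub>M Rs s"

definition shift :: "nat \<Rightarrow> (nat \<Rightarrow> real) \<Rightarrow> real \<Rightarrow> nat \<Rightarrow> real" where
  "shift s y z = (\<lambda>i. if i < s - 1 then y (Suc i) else if i = s - 1 then z else undefined)"

definition ar_mean :: "nat \<Rightarrow> msar_param \<Rightarrow> nat \<Rightarrow> (nat \<Rightarrow> real) \<Rightarrow> real" where
  "ar_mean s \<theta> x y = ms_beta \<theta> x 0 + (\<Sum>l=1..s. ms_beta \<theta> x l * y (s - l))"

definition stay_prob :: "nat \<Rightarrow> nat \<Rightarrow> msar_param \<Rightarrow> nat \<Rightarrow> (nat \<Rightarrow> real) \<Rightarrow> real" where
  "stay_prob s r \<theta> x y = ms_pim \<theta> x + (1 - ms_pim \<theta> x - ms_pip \<theta> x)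
       / (1 + exp (ms_lam0 \<theta> x + ms_lam1 \<theta> x * y (s - r)))"

definition trans_prob :: "nat \<Rightarrow> nat \<Rightarrow> msar_param \<Rightarrow> nat \<Rightarrow> nat \<Rightarrow> (nat \<Rightarrow> real) \<Rightarrow> real" where
  "trans_prob s r \<theta> x x' y = (if x' = x then stay_prob s r \<theta> x y else 1 - stay_prob s r \<theta> x y)"

text \<open>One-step transition operator of the chain (X_k, Y_{k-s+1}^k) acting on
  nonnegative functions: (P f)(x,y) = E[f(X_1, Y_{-s+2}^1) | X_0 = x, Y_{-s+1}^0 = y].\<close>
definition msar_step :: "nat \<Rightarrow> nat \<Rightarrow> msar_param \<Rightarrow>
    (nat \<times> (nat \<Rightarrow> real) \<Rightarrow> ennreal) \<Rightarrow> (nat \<times> (nat \<Rightarrow> real) \<Rightarrow> ennreal)" where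
  "msar_step s r \<theta> f = (\<lambda>(x, y). \<Sum>x'\<in>{1,2}. ennreal (trans_prob s r \<theta> x x' y) *
      (\<integral>\<^sup>+ z. ennreal (normal_density (ar_mean s \<theta> x' y) (ms_sigma \<theta> x') z)
              * f (x', shift s y z) \<partial>lborel))"

definition msar_Pn :: "nat \<Rightarrow> nat \<Rightarrow> msar_param \<Rightarrow> nat \<Rightarrow>
    (nat \<times> (nat \<Rightarrow> real)) set \<Rightarrow> nat \<times> (nat \<Rightarrow> real) \<Rightarrow> ennreal" where
  "msar_Pn s r \<theta> n A = (msar_step s r \<theta> ^^ n) (indicator A)"

definition psi_irreducible :: "(nat \<Rightarrow> 'a set \<Rightarrow> 'a \<Rightarrow> ennreal) \<Rightarrow> 'a measure \<Rightarrow> 'a measure \<Rightarrow> bool" where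
  "psi_irreducible Pn M \<psi> \<longleftrightarrow> sets \<psi> = sets M \<and>
     (\<forall>A\<in>sets M. emeasure \<psi> A > 0 \<longrightarrow> (\<forall>x\<in>space M. \<exists>n\<ge>1. Pn n A x > 0))"

definition small_set :: "(nat \<Rightarrow> 'a set \<Rightarrow> 'a \<Rightarrow> ennreal) \<Rightarrow> 'a measure \<Rightarrow> nat \<Rightarrow> 'a measure \<Rightarrow> 'a set \<Rightarrow> bool" where
  "small_set Pn M m \<nu> C \<longleftrightarrow> C \<in> sets M \<and> sets \<nu> = sets M \<and> emeasure \<nu> (space M) > 0 \<and>
     (\<forall>x\<in>C. \<forall>A\<in>sets M. Pn m A x \<ge> emeasure \<nu> A)"

definition equivalent_measures :: "'a measure \<Rightarrow> 'a measure \<Rightarrow> bool" where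
  "equivalent_measures \<nu> \<mu> \<longleftrightarrow> sets \<nu> = sets \<mu> \<and>
     (\<forall>A\<in>sets \<mu>. emeasure \<nu> A = 0 \<longleftrightarrow> emeasure \<mu> A = 0)"

definition aperiodic :: "(nat \<Rightarrow> 'a set \<Rightarrow> 'a \<Rightarrow> ennreal) \<Rightarrow> 'a measure \<Rightarrow> 'a measure \<Rightarrow> bool" where
  "aperiodic Pn M \<psi> \<longleftrightarrow> \<not> (\<exists>d\<ge>2. \<exists>D :: nat \<Rightarrow> 'a set.
      (\<forall>i<d. D i \<in> sets M) \<and> disjoint_family_on D {..<d} \<and>
      (\<forall>i<d. \<forall>x\<in>D i. Pn 1 (D (Suc i mod d)) x = 1) \<and>
      emeasure \<psi> (space M - (\<Union>i<d. D i)) = 0)"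

definition is_norm_Rs :: "nat \<Rightarrow> ((nat \<Rightarrow> real) \<Rightarrow> real) \<Rightarrow> bool" where
  "is_norm_Rs s N \<longleftrightarrow>
     (\<forall>y\<in>space (Rs s). N y = 0 \<longleftrightarrow> y = restrict (\<lambda>_. 0) {..<s}) \<and>
     (\<forall>y\<in>space (Rs s). \<forall>c. N (restrict (\<lambda>i. c * y i) {..<s}) = \<bar>c\<bar> * N y) \<and>
     (\<forall>y\<in>space (Rs s). \<forall>z\<in>space (Rs s). N (restrict (\<lambda>i. y i + z i) {..<s}) \<le> N y + N z)"

definition ball_set :: "nat \<Rightarrow> ((nat \<Rightarrow> real) \<Rightarrow> real) \<Rightarrow> real \<Rightarrow> (nat \<times> (nat \<Rightarrow> real)) set" where
  "ball_set s N R = {(x, y). x \<in> {1,2} \<and> y \<in> space (Rs s) \<and> N y \<le> R}"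

end

theory Submission
  imports Defs
begin

lemma space_Rs: "space (Rs s) = {..<s} \<rightarrow>\<^sub>E (UNIV::real set)"
  by (simp add: Rs_def space_PiM)

lemma shift_eq: "1 \<le> s \<Longrightarrow> Defs.shift s y z = (\<lambda>i\<in>{..<s}. if i < s - 1 then y (Suc i) else z)"
  by (auto simp: shift_def fun_eq_iff)

lemma shift_meas2[measurable]: "1 \<le> s \<Longrightarrow> (\<lambda>p. Defs.shift s (fst p) (snd p)) \<in> measurable (Rs s \<Otimes>\<^sub>M lborel) (Rs s)"
proof -
  assume s: "1 \<le> s"
  have "(\<lambda>p. \<lambda>i\<in>{..<s}. if i < s - 1 then fst p (Suc i) else snd p) \<in> measurable (Rs s \<Otimes>\<^sub>M lborel) (Rs s)"
    unfolding Rs_def by (rule measurable_restrict) (case_tac "i < s - 1", auto)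
  then show ?thesis using shift_eq[OF s] by simp
qed

lemma shift_meas1[measurable]: "1 \<le> s \<Longrightarrow> Defs.shift s y \<in> measurable lborel (Rs s)"
proof -
  assume s: "1 \<le> s"
  have "(\<lambda>z. \<lambda>i\<in>{..<s}. if i < s - 1 then y (Suc i) else z) \<in> measurable lborel (Rs s)"
    unfolding Rs_def by (rule measurable_restrict) (case_tac "i < s - 1", auto)
  moreover have "Defs.shift s y = (\<lambda>z. \<lambda>i\<in>{..<s}. if i < s - 1 then y (Suc i) else z)"
    using shift_eq[OF s] by (simp add: fun_eq_iff)
  ultimately show ?thesis by simp
qed


lemma comp_meas: "j < s \<Longrightarrow> (\<lambda>y. y j) \<in> borel_measurable (Rs s)"
  unfolding Rs_def using measurable_component_singleton[of j "{..<s}" "\<lambda>_. lborel"]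
  by (simp add: measurable_lborel2)

lemma ar_mean_meas: "(\<lambda>y. ar_mean s \<theta> x y) \<in> borel_measurable (Rs s)"
proof -
  have "\<And>l. l \<in> {1..s} \<Longrightarrow> (\<lambda>y. ms_beta \<theta> x l * y (s - l)) \<in> borel_measurable (Rs s)"
    using comp_meas by (intro borel_measurable_times) auto
  then show ?thesis unfolding ar_mean_def
    by (intro borel_measurable_add borel_measurable_sum) auto
qed

lemma trans_meas: "1 \<le> r \<Longrightarrow> r \<le> s \<Longrightarrow> (\<lambda>y. trans_prob s r \<theta> x x' y) \<in> borel_measurable (Rs s)"
proof -
  assume "1 \<le> r" "r \<le> s"
  then have [measurable]: "(\<lambda>y. y (s - r)) \<in> borel_measurable (Rs s)" by (intro comp_meas) auto
  show ?thesis unfolding trans_prob_def stay_prob_def by measurable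
qed

lemma step_fiber_meas:
  assumes s: "1 \<le> s" and r: "1 \<le> r" "r \<le> s" and f[measurable]: "f \<in> borel_measurable (state_space s)"
  shows "(\<lambda>y. msar_step s r \<theta> f (x, y)) \<in> borel_measurable (Rs s)"
proof -
  have [measurable]: "(\<lambda>y. trans_prob s r \<theta> x x' y) \<in> borel_measurable (Rs s)" for x x' using trans_meas r by auto
  have [measurable]: "(\<lambda>y. ar_mean s \<theta> x y) \<in> borel_measurable (Rs s)" for x using ar_mean_meas by auto
  have fm: "(\<lambda>p. f (x', Defs.shift s (fst p) (snd p))) \<in> borel_measurable (Rs s \<Otimes>\<^sub>M lborel)" if "x' \<in> {1,2}" for x'
  proof -
    have "(\<lambda>p. (x', Defs.shift s (fst p) (snd p))) \<in> measurable (Rs s \<Otimes>\<^sub>M lborel) (state_space s)"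
      unfolding state_space_def using shift_meas2[OF s] that by (auto intro!: measurable_Pair)
    then show ?thesis using f by (rule measurable_compose)
  qed
  have nm: "(\<lambda>p. ennreal (normal_density (ar_mean s \<theta> x' (fst p)) (ms_sigma \<theta> x') (snd p)) * f (x', Defs.shift s (fst p) (snd p))) \<in> borel_measurable (Rs s \<Otimes>\<^sub>M lborel)" if "x' \<in> {1,2}" for x'
    using fm[OF that] unfolding normal_density_def by measurable
  then have "(\<lambda>y. \<integral>\<^sup>+ z. ennreal (normal_density (ar_mean s \<theta> x' y) (ms_sigma \<theta> x') z) * f (x', Defs.shift s y z) \<partial>lborel) \<in> borel_measurable (Rs s)" if "x' \<in> {1,2}" for x'
    using lborel.borel_measurable_nn_integral_fst[OF nm[OF that]] by simp
  then show ?thesis unfolding msar_step_def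
    by (auto intro!: borel_measurable_sum borel_measurable_times measurable_compose[OF _ measurable_ennreal])
qed


lemma step_meas:
  assumes s: "1 \<le> s" and r: "1 \<le> r" "r \<le> s" and f: "f \<in> borel_measurable (state_space s)"
  shows "msar_step s r \<theta> f \<in> borel_measurable (state_space s)"
proof -
  have "(\<lambda>p. (\<lambda>i p. msar_step s r \<theta> f (i, snd p)) (fst p) p) \<in> borel_measurable (state_space s)"
  proof (rule measurable_compose_countable)
    fix i :: nat
    show "(\<lambda>p. msar_step s r \<theta> f (i, snd p)) \<in> borel_measurable (state_space s)"
      unfolding state_space_def using step_fiber_meas[OF s r f, of \<theta> i] by measurable
  next
    show "fst \<in> state_space s \<rightarrow>\<^sub>M count_space UNIV"
      unfolding state_space_def by (rule measurable_compose[OF measurable_fst]) (simp add: measurable_count_space_eq1)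
  qed
  then show ?thesis by simp
qed

lemma stepn_meas:
  assumes s: "1 \<le> s" and r: "1 \<le> r" "r \<le> s" and f: "f \<in> borel_measurable (state_space s)"
  shows "(msar_step s r \<theta> ^^ n) f \<in> borel_measurable (state_space s)"
  by (induction n) (auto intro: step_meas[OF s r] f)

definition L1 :: "nat \<Rightarrow> (nat \<Rightarrow> real) \<Rightarrow> real" where
  "L1 s y = (\<Sum>i<s. \<bar>y i\<bar>)"

lemma L1_nonneg: "0 \<le> L1 s y" unfolding L1_def by (simp add: sum_nonneg)

lemma abs_le_L1: "i < s \<Longrightarrow> \<bar>y i\<bar> \<le> L1 s y"
  unfolding L1_def by (rule member_le_sum[of i "{..<s}" "\<lambda>i. \<bar>y i\<bar>", simplified]) auto

lemma mean_bound: "\<bar>ar_mean s \<theta> x y\<bar> \<le> \<bar>ms_beta \<theta> x 0\<bar> + (\<Sum>l=1..s. \<bar>ms_beta \<theta> x l\<bar>) * L1 s y"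
proof -
  have "\<bar>\<Sum>l=1..s. ms_beta \<theta> x l * y (s - l)\<bar> \<le> (\<Sum>l=1..s. \<bar>ms_beta \<theta> x l * y (s - l)\<bar>)"
    by (rule sum_abs)
  also have "\<dots> \<le> (\<Sum>l=1..s. \<bar>ms_beta \<theta> x l\<bar> * L1 s y)"
    by (intro sum_mono) (auto simp: abs_mult intro!: mult_left_mono abs_le_L1)
  also have "\<dots> = (\<Sum>l=1..s. \<bar>ms_beta \<theta> x l\<bar>) * L1 s y" by (simp add: sum_distrib_right)
  finally show ?thesis unfolding ar_mean_def by (smt (verit) abs_triangle_ineq)
qed

lemma sq_sum_le: "((a::real) + b)\<^sup>2 \<le> 2 * a\<^sup>2 + 2 * b\<^sup>2"
proof -
  have "0 \<le> (a - b)\<^sup>2" by simp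
  then show ?thesis by (simp add: power2_eq_square algebra_simps)
qed

lemma sq_diff_le: "((a::real) - b)\<^sup>2 \<le> 2 * a\<^sup>2 + 2 * b\<^sup>2"
  using sq_sum_le[of a "-b"] by simp

lemma normal_lower:
  assumes "\<theta> \<in> theta_tilde"
  shows "\<exists>A c. A > 0 \<and> c > 0 \<and> (\<forall>x'\<in>{1,2}. \<forall>y z.
     normal_density (ar_mean s \<theta> x' y) (ms_sigma \<theta> x') z \<ge> A * exp (- c * z\<^sup>2) * exp (- c * (L1 s y)\<^sup>2))"
proof -
  have sig: "ms_sigma \<theta> x > 0" if "x \<in> {1,2}" for x using assms that unfolding theta_tilde_def by auto
  define S where "S = 1 / (ms_sigma \<theta> 1)\<^sup>2 + 1 / (ms_sigma \<theta> 2)\<^sup>2"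
  define T where "T = (ms_sigma \<theta> 1)\<^sup>2 + (ms_sigma \<theta> 2)\<^sup>2"
  define B0 where "B0 = (ms_beta \<theta> 1 0)\<^sup>2 + (ms_beta \<theta> 2 0)\<^sup>2"
  define B1 where "B1 = (\<Sum>l=1..s. \<bar>ms_beta \<theta> 1 l\<bar>)\<^sup>2 + (\<Sum>l=1..s. \<bar>ms_beta \<theta> 2 l\<bar>)\<^sup>2"
  define c where "c = 2 * S * (B1 + 1)"
  define A where "A = 1 / sqrt (2 * pi * T) * exp (- 2 * S * B0)"
  have S: "S > 0" "T > 0" using sig[of 1] sig[of 2] by (auto simp: S_def T_def intro!: add_pos_pos)
  have B: "B0 \<ge> 0" "B1 \<ge> 0" by (auto simp: B0_def B1_def)
  have "c > 0" using S B by (simp add: c_def)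
  moreover have "A > 0" using S by (simp add: A_def)
  moreover have "normal_density (ar_mean s \<theta> x' y) (ms_sigma \<theta> x') z \<ge> A * exp (- c * z\<^sup>2) * exp (- c * (L1 s y)\<^sup>2)"
    if x': "x' \<in> {1,2}" for x' y z
  proof -
    define \<sigma> where "\<sigma> = ms_sigma \<theta> x'"
    define m where "m = ar_mean s \<theta> x' y"
    define b0 where "b0 = \<bar>ms_beta \<theta> x' 0\<bar>"
    define b1 where "b1 = (\<Sum>l=1..s. \<bar>ms_beta \<theta> x' l\<bar>)"
    have \<sigma>: "\<sigma> > 0" using sig[OF x'] by (simp add: \<sigma>_def)
    have s1: "1 / \<sigma>\<^sup>2 \<le> S" using x' S by (auto simp: S_def \<sigma>_def)
    have t1: "\<sigma>\<^sup>2 \<le> T" using x' S by (auto simp: T_def \<sigma>_def)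
    have b0: "b0\<^sup>2 \<le> B0" using x' by (auto simp: B0_def b0_def)
    have b1: "b1\<^sup>2 \<le> B1" "b1 \<ge> 0" using x' by (auto simp: B1_def b1_def intro: sum_nonneg)
    have L: "L1 s y \<ge> 0" by (rule L1_nonneg)
    have mb: "\<bar>m\<bar> \<le> b0 + b1 * L1 s y" unfolding m_def b0_def b1_def by (rule mean_bound)
    have m2: "m\<^sup>2 \<le> 2 * B0 + 2 * B1 * (L1 s y)\<^sup>2"
    proof -
      have "m\<^sup>2 \<le> (b0 + b1 * L1 s y)\<^sup>2" 
      proof -
        have "\<bar>m\<bar>\<^sup>2 \<le> (b0 + b1 * L1 s y)\<^sup>2" by (rule power_mono[OF mb]) simp
        then show ?thesis by simp
      qed
      also have "\<dots> \<le> 2 * b0\<^sup>2 + 2 * (b1 * L1 s y)\<^sup>2" by (rule sq_sum_le)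
      also have "\<dots> \<le> 2 * B0 + 2 * B1 * (L1 s y)\<^sup>2" 
    proof -
      have "b1\<^sup>2 * (L1 s y)\<^sup>2 \<le> B1 * (L1 s y)\<^sup>2" using b1(1) by (rule mult_right_mono) simp
      then show ?thesis using b0 by (simp add: power_mult_distrib)
    qed
      finally show ?thesis .
    qed
    have zm: "(z - m)\<^sup>2 / (2 * \<sigma>\<^sup>2) \<le> S * (z\<^sup>2 + m\<^sup>2)"
    proof -
      have "(z - m)\<^sup>2 \<le> 2 * (z\<^sup>2 + m\<^sup>2)" using sq_diff_le[of z m] by simp
      then have "(z - m)\<^sup>2 / (2 * \<sigma>\<^sup>2) \<le> 2 * (z\<^sup>2 + m\<^sup>2) / (2 * \<sigma>\<^sup>2)" using \<sigma> by (intro divide_right_mono) auto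
      also have "\<dots> = (z\<^sup>2 + m\<^sup>2) * (1 / \<sigma>\<^sup>2)" using \<sigma> by (simp add: field_simps)
      also have "\<dots> \<le> (z\<^sup>2 + m\<^sup>2) * S" using s1 by (intro mult_left_mono) auto
      finally show ?thesis by (simp add: mult.commute)
    qed
    have expo: "(- c * z\<^sup>2) + (- c * (L1 s y)\<^sup>2) + (- 2 * S * B0) \<le> - ((z - m)\<^sup>2 / (2 * \<sigma>\<^sup>2))"
    proof -
      have "S * (z\<^sup>2 + m\<^sup>2) \<le> S * z\<^sup>2 + S * (2 * B0 + 2 * B1 * (L1 s y)\<^sup>2)"
        using mult_left_mono[OF m2, of S] S by (simp add: distrib_left)
      moreover have "S * z\<^sup>2 \<le> c * z\<^sup>2" using S B by (intro mult_right_mono) (auto simp: c_def)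
      moreover have "S * (2 * B1 * (L1 s y)\<^sup>2) \<le> c * (L1 s y)\<^sup>2"
      proof -
        have "S * (2 * B1) \<le> c" using S B by (auto simp: c_def)
        then have "S * (2 * B1) * (L1 s y)\<^sup>2 \<le> c * (L1 s y)\<^sup>2" by (rule mult_right_mono) simp
        then show ?thesis by (simp add: mult.assoc)
      qed
      ultimately show ?thesis using zm by (simp add: algebra_simps)
    qed
    have "A * exp (- c * z\<^sup>2) * exp (- c * (L1 s y)\<^sup>2) = 1 / sqrt (2 * pi * T) * exp ((- c * z\<^sup>2) + (- c * (L1 s y)\<^sup>2) + (- 2 * S * B0))"
      unfolding A_def exp_add by (simp only: mult_ac)
    also have "\<dots> \<le> 1 / sqrt (2 * pi * \<sigma>\<^sup>2) * exp (- ((z - m)\<^sup>2 / (2 * \<sigma>\<^sup>2)))"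
    proof (rule mult_mono)
      show "1 / sqrt (2 * pi * T) \<le> 1 / sqrt (2 * pi * \<sigma>\<^sup>2)"
        using t1 \<sigma> S by (intro divide_left_mono) (auto intro!: real_sqrt_le_mono mult_pos_pos)
    qed (use expo in auto)
    finally show ?thesis unfolding normal_density_def m_def \<sigma>_def by simp
  qed
  ultimately show ?thesis by blast
qed


definition pmin :: "msar_param \<Rightarrow> real" where
  "pmin \<theta> = min (min (ms_pim \<theta> 1) (ms_pim \<theta> 2)) (min (ms_pip \<theta> 1) (ms_pip \<theta> 2))"

lemma pmin_pos: "\<theta> \<in> theta_tilde \<Longrightarrow> pmin \<theta> > 0"
  unfolding theta_tilde_def pmin_def by auto

lemma stay_bounds:
  assumes "\<theta> \<in> theta_tilde" "x \<in> {1,2}"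
  shows "ms_pim \<theta> x < stay_prob s r \<theta> x y" "stay_prob s r \<theta> x y < 1 - ms_pip \<theta> x"
proof -
  define e where "e = exp (ms_lam0 \<theta> x + ms_lam1 \<theta> x * y (s - r))"
  define d where "d = 1 - ms_pim \<theta> x - ms_pip \<theta> x"
  have d: "d > 0" using assms unfolding theta_tilde_def d_def by auto
  have e: "e > 0" unfolding e_def by simp
  have "d / (1 + e) > 0" using d e by simp
  moreover have "d / (1 + e) < d" using d e by (simp add: divide_less_eq)
  ultimately show "ms_pim \<theta> x < stay_prob s r \<theta> x y" "stay_prob s r \<theta> x y < 1 - ms_pip \<theta> x"
    unfolding stay_prob_def e_def[symmetric] d_def[symmetric] by (auto simp: d_def)
qed

lemma trans_lower:
  assumes "\<theta> \<in> theta_tilde" "x \<in> {1,2}" "x' \<in> {1,2}"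
  shows "pmin \<theta> \<le> trans_prob s r \<theta> x x' y"
  using stay_bounds[OF assms(1,2), of s r y] assms(2)
  unfolding trans_prob_def pmin_def by auto

lemma trans_sum:
  assumes "\<theta> \<in> theta_tilde" "x \<in> {1,2}"
  shows "(\<Sum>x'\<in>{1,2::nat}. ennreal (trans_prob s r \<theta> x x' y)) = 1"
proof -
  define t where "t = stay_prob s r \<theta> x y"
  have t: "0 \<le> t" "t \<le> 1" using stay_bounds[OF assms, of s r y] assms unfolding t_def theta_tilde_def by auto
  have "ennreal t + ennreal (1 - t) = 1" using t by (subst ennreal_plus[symmetric]) auto
  moreover consider "x = 1" | "x = 2" using assms by auto
  ultimately show ?thesis unfolding trans_prob_def t_def[symmetric]
    by cases (auto simp: add.commute)
qed

lemma comp_shift_meas: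
  assumes s: "1 \<le> s" and f: "f \<in> borel_measurable (state_space s)" and x': "x' \<in> {1,2}"
  shows "(\<lambda>z. f (x', Defs.shift s y z)) \<in> borel_measurable lborel"
proof -
  have "(\<lambda>z. (x', Defs.shift s y z)) \<in> measurable lborel (state_space s)"
    unfolding state_space_def using shift_meas1[OF s] x' by (auto intro!: measurable_Pair)
  then show ?thesis using f by (rule measurable_compose)
qed

lemma one_step:
  assumes s: "1 \<le> s" and th: "\<theta> \<in> theta_tilde"
  shows "\<exists>a c. a > 0 \<and> c > 0 \<and> (\<forall>x\<in>{1,2}. \<forall>y. \<forall>f \<in> borel_measurable (state_space s).
     msar_step s r \<theta> f (x, y) \<ge> (\<integral>\<^sup>+ z. ennreal (a * exp (- c * z\<^sup>2) * exp (- c * (L1 s y)\<^sup>2)) * (\<Sum>x'\<in>{1,2}. f (x', Defs.shift s y z)) \<partial>lborel))"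
proof -
  obtain A c where A: "A > 0" "c > 0" and nl: "\<And>x' y z. x' \<in> {1,2} \<Longrightarrow>
     normal_density (ar_mean s \<theta> x' y) (ms_sigma \<theta> x') z \<ge> A * exp (- c * z\<^sup>2) * exp (- c * (L1 s y)\<^sup>2)"
    using normal_lower[OF th, of s] by blast
  define p where "p = pmin \<theta>"
  have p: "p > 0" using pmin_pos[OF th] by (simp add: p_def)
  have "msar_step s r \<theta> f (x, y) \<ge> (\<integral>\<^sup>+ z. ennreal (p * A * exp (- c * z\<^sup>2) * exp (- c * (L1 s y)\<^sup>2)) * (\<Sum>x'\<in>{1,2}. f (x', Defs.shift s y z)) \<partial>lborel)"
    if x: "x \<in> {1,2}" and f: "f \<in> borel_measurable (state_space s)" for x y f
  proof -
    let ?g = "\<lambda>z. ennreal (A * exp (- c * z\<^sup>2) * exp (- c * (L1 s y)\<^sup>2))"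
    have gm: "?g \<in> borel_measurable lborel" by measurable
    have fm: "(\<lambda>z. f (x', Defs.shift s y z)) \<in> borel_measurable lborel" if "x' \<in> {1,2}" for x'
      using comp_shift_meas[OF s f that] .
    have "(\<integral>\<^sup>+ z. ennreal (p * A * exp (- c * z\<^sup>2) * exp (- c * (L1 s y)\<^sup>2)) * (\<Sum>x'\<in>{1,2}. f (x', Defs.shift s y z)) \<partial>lborel)
        = (\<integral>\<^sup>+ z. (\<Sum>x'\<in>{1,2::nat}. ennreal p * (?g z * f (x', Defs.shift s y z))) \<partial>lborel)"
      using p A by (intro nn_integral_cong) (auto simp: sum_distrib_left ennreal_mult mult.assoc distrib_left)
    also have "\<dots> = (\<Sum>x'\<in>{1,2::nat}. \<integral>\<^sup>+ z. ennreal p * (?g z * f (x', Defs.shift s y z)) \<partial>lborel)"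
      using fm gm by (intro nn_integral_sum) auto
    also have "\<dots> = (\<Sum>x'\<in>{1,2::nat}. ennreal p * \<integral>\<^sup>+ z. ?g z * f (x', Defs.shift s y z) \<partial>lborel)"
      using fm gm by (intro sum.cong refl nn_integral_cmult) auto
    also have "\<dots> \<le> (\<Sum>x'\<in>{1,2::nat}. ennreal (trans_prob s r \<theta> x x' y) *
        \<integral>\<^sup>+ z. ennreal (normal_density (ar_mean s \<theta> x' y) (ms_sigma \<theta> x') z) * f (x', Defs.shift s y z) \<partial>lborel)"
    proof (rule sum_mono)
      fix x' :: nat assume x': "x' \<in> {1,2}"
      have 1: "ennreal p \<le> ennreal (trans_prob s r \<theta> x x' y)"
        using trans_lower[OF th x x', of s r y] by (simp add: p_def ennreal_leI)
      have 2: "(\<integral>\<^sup>+ z. ?g z * f (x', Defs.shift s y z) \<partial>lborel) \<le> (\<integral>\<^sup>+ z. ennreal (normal_density (ar_mean s \<theta> x' y) (ms_sigma \<theta> x') z) * f (x', Defs.shift s y z) \<partial>lborel)"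
        by (intro nn_integral_mono mult_right_mono ennreal_leI nl[OF x']) auto
      show "ennreal p * (\<integral>\<^sup>+ z. ?g z * f (x', Defs.shift s y z) \<partial>lborel) \<le> ennreal (trans_prob s r \<theta> x x' y) *
        \<integral>\<^sup>+ z. ennreal (normal_density (ar_mean s \<theta> x' y) (ms_sigma \<theta> x') z) * f (x', Defs.shift s y z) \<partial>lborel"
        using 1 2 by (rule mult_mono) auto
    qed
    also have "\<dots> = msar_step s r \<theta> f (x, y)" unfolding msar_step_def by simp
    finally show ?thesis .
  qed
  moreover have "p * A > 0" using p A by simp
  ultimately show ?thesis using A by blast
qed


definition shiftk :: "nat \<Rightarrow> nat \<Rightarrow> (nat \<Rightarrow> real) \<Rightarrow> (nat \<Rightarrow> real) \<Rightarrow> nat \<Rightarrow> real" where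
  "shiftk s k y w = (\<lambda>i. if i < s - k then y (i + k) else if i < s then w (i - (s - k)) else undefined)"

lemma shift_shiftk: "k + 1 \<le> s \<Longrightarrow> Defs.shift s (shiftk s k y w) z = shiftk s (Suc k) y (w(k := z))"
  unfolding shift_def shiftk_def by (auto simp: fun_eq_iff)

lemma shiftk_1: "1 \<le> s \<Longrightarrow> shiftk s 1 y ((\<lambda>_. undefined)(0 := z)) = Defs.shift s y z"
  unfolding shift_def shiftk_def by (auto simp: fun_eq_iff)

lemma shiftk_s: "w \<in> space (Rs s) \<Longrightarrow> shiftk s s y w = w"
  unfolding shiftk_def space_Rs by (auto simp: fun_eq_iff PiE_def extensional_def)

lemma L1_upd: "L1 (Suc k) (w(k := z)) = L1 k w + \<bar>z\<bar>"
  unfolding L1_def by simp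

lemma L1_shiftk: assumes "k \<le> s" shows "L1 s (shiftk s k y w) \<le> L1 s y + L1 k w"
proof -
  have "L1 s (shiftk s k y w) = (\<Sum>i\<in>{0..<s-k}. \<bar>shiftk s k y w i\<bar>) + (\<Sum>i\<in>{s-k..<s}. \<bar>shiftk s k y w i\<bar>)"
    unfolding L1_def by (subst sum.atLeastLessThan_concat) (auto simp: atLeast0LessThan)
  also have "(\<Sum>i\<in>{0..<s-k}. \<bar>shiftk s k y w i\<bar>) = (\<Sum>i\<in>{0..<s-k}. \<bar>y (k + i)\<bar>)"
    by (intro sum.cong) (auto simp: shiftk_def add.commute)
  also have "\<dots> = (\<Sum>j\<in>{k..<s}. \<bar>y j\<bar>)"
    using sum.atLeastLessThan_shift_0[of "\<lambda>j. \<bar>y j\<bar>" k s] assms by (simp add: comp_def)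
  also have "\<dots> \<le> L1 s y" unfolding L1_def by (intro sum_mono2) auto
  also have "(\<Sum>i\<in>{s-k..<s}. \<bar>shiftk s k y w i\<bar>) = (\<Sum>i\<in>{s-k..<s}. \<bar>w (i - (s - k))\<bar>)"
    by (intro sum.cong) (auto simp: shiftk_def)
  also have "\<dots> = (\<Sum>j\<in>{0..<k}. \<bar>w j\<bar>)"
    using sum.atLeastLessThan_shift_0[of "\<lambda>i. \<bar>w (i - (s - k))\<bar>" "s - k" s] assms by (simp add: comp_def)
  also have "\<dots> = L1 k w" unfolding L1_def by (simp add: atLeast0LessThan)
  finally show ?thesis by simp
qed

lemma shiftk_meas[measurable]:
  assumes "k \<le> s"
  shows "shiftk s k y \<in> measurable (PiM {..<k} (\<lambda>_. lborel)) (Rs s)"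
proof -
  have "(\<lambda>w. \<lambda>i\<in>{..<s}. if i < s - k then y (i + k) else w (i - (s - k))) \<in> measurable (PiM {..<k} (\<lambda>_. lborel)) (Rs s)"
    unfolding Rs_def
  proof (rule measurable_restrict)
    fix i assume "i \<in> {..<s}"
    then have "i < s - k \<or> i - (s - k) < k" using assms by auto
    moreover have "i - (s - k) < k \<Longrightarrow> (\<lambda>w. w (i - (s - k))) \<in> borel_measurable (PiM {..<k} (\<lambda>_. lborel))"
      using measurable_component_singleton[of "i - (s - k)" "{..<k}" "\<lambda>_. lborel"] by (simp add: measurable_lborel2)
    ultimately have "(\<lambda>w. if i < s - k then y (i + k) else w (i - (s - k))) \<in> borel_measurable (PiM {..<k} (\<lambda>_. lborel))"
      by (cases "i < s - k") auto
    then show "(\<lambda>w. if i < s - k then y (i + k) else w (i - (s - k))) \<in> measurable (PiM {..<k} (\<lambda>_. lborel)) lborel"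
      by (simp add: measurable_lborel2)
  qed
  moreover have "shiftk s k y = (\<lambda>w. \<lambda>i\<in>{..<s}. if i < s - k then y (i + k) else w (i - (s - k)))"
    by (auto simp: shiftk_def fun_eq_iff)
  ultimately show ?thesis by simp
qed

lemma L1_meas[measurable]: "L1 k \<in> borel_measurable (PiM {..<k} (\<lambda>_. lborel :: real measure))"
proof -
  have H: "(\<lambda>w. w i) \<in> borel_measurable (PiM {..<k} (\<lambda>_. lborel :: real measure))" if "i < k" for i
    using measurable_component_singleton[of i "{..<k}" "\<lambda>_. lborel"] that by (simp add: measurable_lborel2)
  then have "(\<lambda>w. \<bar>w i\<bar>) \<in> borel_measurable (PiM {..<k} (\<lambda>_. lborel :: real measure))" if "i < k" for i
    using borel_measurable_abs[OF H[OF that]] by simp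
  then have "(\<lambda>w. \<Sum>i<k. \<bar>w i\<bar>) \<in> borel_measurable (PiM {..<k} (\<lambda>_. lborel :: real measure))" by (intro borel_measurable_sum) auto
  then show ?thesis by (simp add: L1_def[abs_def])
qed

interpretation PL: product_sigma_finite "\<lambda>_::nat. lborel :: real measure"
  by standard


abbreviation Pk :: "nat \<Rightarrow> (nat \<Rightarrow> real) measure" where
  "Pk k \<equiv> PiM {..<k} (\<lambda>_. lborel :: real measure)"

lemma comp_shiftk_meas:
  assumes k: "k \<le> s" and f: "f \<in> borel_measurable (state_space s)" and x': "x' \<in> {1,2}"
  shows "(\<lambda>w. f (x', shiftk s k y w)) \<in> borel_measurable (Pk k)"
proof -
  have "(\<lambda>w. (x', shiftk s k y w)) \<in> measurable (Pk k) (state_space s)"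
    unfolding state_space_def using shiftk_meas[OF k] x' by (auto intro!: measurable_Pair)
  then show ?thesis using f by (rule measurable_compose)
qed

lemma key_ineq:
  fixes a c e lw lp ly z :: real
  assumes "a \<ge> 0" "c \<ge> 0" "e \<ge> 0" "0 \<le> lw" "0 \<le> lp" "lp \<le> ly + lw" "0 \<le> ly"
  shows "a * exp (- (2 * c) * ly\<^sup>2) * exp (- (e + 3 * c) * (lw + \<bar>z\<bar>)\<^sup>2) \<le> exp (- e * lw\<^sup>2) * (a * exp (- c * z\<^sup>2) * exp (- c * lp\<^sup>2))"
proof -
  have lp2: "lp\<^sup>2 \<le> 2 * ly\<^sup>2 + 2 * lw\<^sup>2"
  proof -
    have "lp\<^sup>2 \<le> (ly + lw)\<^sup>2" using assms by (intro power_mono) auto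
    also have "\<dots> \<le> 2 * ly\<^sup>2 + 2 * lw\<^sup>2" by (rule sq_sum_le)
    finally show ?thesis .
  qed
  define T where "T = (lw + \<bar>z\<bar>)\<^sup>2"
  have T1: "lw\<^sup>2 \<le> T" unfolding T_def using assms by (intro power_mono) auto
  have T2: "z\<^sup>2 \<le> T"
  proof -
    have "\<bar>z\<bar>\<^sup>2 \<le> (lw + \<bar>z\<bar>)\<^sup>2" using assms by (intro power_mono) auto
    then show ?thesis unfolding T_def by simp
  qed
  have "- (2 * c) * ly\<^sup>2 + - (e + 3 * c) * T \<le> - e * lw\<^sup>2 + (- c * z\<^sup>2 + - c * lp\<^sup>2)"
  proof -
    have "e * lw\<^sup>2 \<le> e * T" using T1 assms by (intro mult_left_mono) auto
    moreover have "c * z\<^sup>2 \<le> c * T" using T2 assms by (intro mult_left_mono) auto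
    moreover have "c * lp\<^sup>2 \<le> c * (2 * ly\<^sup>2 + 2 * lw\<^sup>2)" using lp2 assms by (intro mult_left_mono) auto
    moreover have "c * lw\<^sup>2 \<le> c * T" using T1 assms by (intro mult_left_mono) auto
    ultimately show ?thesis by (simp add: algebra_simps)
  qed
  then have "exp (- (2 * c) * ly\<^sup>2 + - (e + 3 * c) * T) \<le> exp (- e * lw\<^sup>2 + (- c * z\<^sup>2 + - c * lp\<^sup>2))" by simp
  then have "exp (- (2 * c) * ly\<^sup>2) * exp (- (e + 3 * c) * T) \<le> exp (- e * lw\<^sup>2) * (exp (- c * z\<^sup>2) * exp (- c * lp\<^sup>2))"
    by (simp only: exp_add)
  then have "a * (exp (- (2 * c) * ly\<^sup>2) * exp (- (e + 3 * c) * T)) \<le> a * (exp (- e * lw\<^sup>2) * (exp (- c * z\<^sup>2) * exp (- c * lp\<^sup>2)))"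
    using assms by (intro mult_left_mono) auto
  then show ?thesis unfolding T_def by (simp add: mult_ac)
qed


lemma Pk1_integral:
  assumes G: "G \<in> borel_measurable (Pk 1)"
  shows "integral\<^sup>N (Pk 1) G = (\<integral>\<^sup>+ z. G ((\<lambda>_. undefined)(0 := z)) \<partial>lborel)"
proof -
  have e: "{..<1::nat} = insert 0 {}" by auto
  have "integral\<^sup>N (Pk 1) G = (\<integral>\<^sup>+ w. (\<integral>\<^sup>+ z. G (w(0 := z)) \<partial>lborel) \<partial>Pk 0)"
    using PL.product_nn_integral_insert[of "{}" 0 G] G unfolding e by simp
  also have "\<dots> = (\<integral>\<^sup>+ z. G ((\<lambda>_. undefined)(0 := z)) \<partial>lborel)"
    by (simp add: PiM_empty nn_integral_count_space_finite fun_upd_def)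
  finally show ?thesis .
qed

lemma base_step:
  assumes s: "1 \<le> s" and f: "f \<in> borel_measurable (state_space s)" and c: "c \<ge> 0" "a \<ge> 0"
  shows "(\<integral>\<^sup>+ z. ennreal (a * exp (- c * z\<^sup>2) * exp (- c * (L1 s y)\<^sup>2)) * (\<Sum>x'\<in>{1,2}. f (x', Defs.shift s y z)) \<partial>lborel)
    = ennreal (a * exp (- c * (L1 s y)\<^sup>2)) * (\<integral>\<^sup>+ w. ennreal (exp (- c * (L1 1 w)\<^sup>2)) * (\<Sum>x'\<in>{1,2}. f (x', shiftk s 1 y w)) \<partial>Pk 1)"
proof -
  have fm: "(\<lambda>z. f (x', Defs.shift s y z)) \<in> borel_measurable lborel" if "x' \<in> {1,2}" for x'
    using comp_shift_meas[OF s f that] .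
  have fm2: "(\<lambda>w. f (x', shiftk s 1 y w)) \<in> borel_measurable (Pk 1)" if "x' \<in> {1,2}" for x'
    using comp_shiftk_meas[OF _ f that] s by auto
  have S[measurable]: "(\<lambda>w. (\<Sum>x'\<in>{1,2}. f (x', shiftk s 1 y w))) \<in> borel_measurable (Pk 1)"
    using fm2 by (intro borel_measurable_sum) auto
  have Gm: "(\<lambda>w. ennreal (exp (- c * (L1 1 w)\<^sup>2)) * (\<Sum>x'\<in>{1,2}. f (x', shiftk s 1 y w))) \<in> borel_measurable (Pk 1)"
    by measurable
  have L: "L1 1 ((\<lambda>_. undefined)(0 := z)) = \<bar>z\<bar>" for z unfolding L1_def by simp
  have "(\<integral>\<^sup>+ w. ennreal (exp (- c * (L1 1 w)\<^sup>2)) * (\<Sum>x'\<in>{1,2}. f (x', shiftk s 1 y w)) \<partial>Pk 1)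
      = (\<integral>\<^sup>+ z. ennreal (exp (- c * z\<^sup>2)) * (\<Sum>x'\<in>{1,2}. f (x', Defs.shift s y z)) \<partial>lborel)"
    by (subst Pk1_integral[OF Gm]) (simp only: L shiftk_1[OF s] power2_abs)
  moreover have "ennreal (a * exp (- c * (L1 s y)\<^sup>2)) * (\<integral>\<^sup>+ z. ennreal (exp (- c * z\<^sup>2)) * (\<Sum>x'\<in>{1,2}. f (x', Defs.shift s y z)) \<partial>lborel)
      = (\<integral>\<^sup>+ z. ennreal (a * exp (- c * (L1 s y)\<^sup>2)) * (ennreal (exp (- c * z\<^sup>2)) * (\<Sum>x'\<in>{1,2}. f (x', Defs.shift s y z))) \<partial>lborel)"
  proof -
    have [measurable]: "(\<lambda>z. (\<Sum>x'\<in>{1,2}. f (x', Defs.shift s y z))) \<in> borel_measurable lborel"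
      using fm by (intro borel_measurable_sum) auto
    show ?thesis by (intro nn_integral_cmult[symmetric]) measurable
  qed
  moreover have "\<dots> = (\<integral>\<^sup>+ z. ennreal (a * exp (- c * z\<^sup>2) * exp (- c * (L1 s y)\<^sup>2)) * (\<Sum>x'\<in>{1,2}. f (x', Defs.shift s y z)) \<partial>lborel)"
    using c by (intro nn_integral_cong) (simp add: ennreal_mult mult_ac)
  ultimately show ?thesis by simp
qed


lemma ind_step:
  assumes s: "1 \<le> s" and r: "1 \<le> r" "r \<le> s" and k: "1 \<le> k" "Suc k \<le> s"
    and ac: "a > 0" "c > 0" and De: "D > 0" "e > 0"
    and one: "\<forall>x\<in>{1,2}. \<forall>y. \<forall>f \<in> borel_measurable (state_space s).
     msar_step s r \<theta> f (x, y) \<ge> (\<integral>\<^sup>+ z. ennreal (a * exp (- c * z\<^sup>2) * exp (- c * (L1 s y)\<^sup>2)) * (\<Sum>x'\<in>{1,2}. f (x', Defs.shift s y z)) \<partial>lborel)"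
    and IH: "\<forall>x\<in>{1,2}. \<forall>y. \<forall>f\<in>borel_measurable (state_space s).
     (msar_step s r \<theta> ^^ k) f (x, y) \<ge> ennreal (D * exp (- e * (L1 s y)\<^sup>2)) *
        (\<integral>\<^sup>+ w. ennreal (exp (- e * (L1 k w)\<^sup>2)) * (\<Sum>x'\<in>{1,2}. f (x', shiftk s k y w)) \<partial>Pk k)"
    and x: "x \<in> {1,2}" and f: "f \<in> borel_measurable (state_space s)"
  shows "(msar_step s r \<theta> ^^ Suc k) f (x, y) \<ge> ennreal ((D * a) * exp (- (e + 3 * c) * (L1 s y)\<^sup>2)) *
        (\<integral>\<^sup>+ v. ennreal (exp (- (e + 3 * c) * (L1 (Suc k) v)\<^sup>2)) * (\<Sum>x'\<in>{1,2}. f (x', shiftk s (Suc k) y v)) \<partial>Pk (Suc k))"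
proof -
  define e' where "e' = e + 3 * c"
  define F1 where "F1 = msar_step s r \<theta> f"
  have F1m: "F1 \<in> borel_measurable (state_space s)" unfolding F1_def by (rule step_meas[OF s r f])
  define H where "H = (\<lambda>v. ennreal (exp (- e' * (L1 (Suc k) v)\<^sup>2)) * (\<Sum>x'\<in>{1,2}. f (x', shiftk s (Suc k) y v)))"
  have Sm[measurable]: "(\<lambda>v. (\<Sum>x'\<in>{1,2}. f (x', shiftk s (Suc k) y v))) \<in> borel_measurable (Pk (Suc k))"
    using comp_shiftk_meas[OF k(2) f] by (intro borel_measurable_sum) auto
  have Hm[measurable]: "H \<in> borel_measurable (Pk (Suc k))" unfolding H_def by measurable
  define C where "C = a * exp (- (2 * c) * (L1 s y)\<^sup>2)"
  have C: "C \<ge> 0" using ac by (simp add: C_def)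
  have Ly: "0 \<le> L1 s y" by (rule L1_nonneg)
  have pw: "ennreal (exp (- e * (L1 k w)\<^sup>2)) * (\<Sum>x'\<in>{1,2}. F1 (x', shiftk s k y w))
      \<ge> (\<integral>\<^sup>+ z. ennreal C * H (w(k := z)) \<partial>lborel)" for w
  proof -
    define p where "p = shiftk s k y w"
    have Lp: "L1 s p \<le> L1 s y + L1 k w" "0 \<le> L1 s p" "0 \<le> L1 k w" unfolding p_def using k
      by (auto intro!: L1_shiftk L1_nonneg)
    have fz[measurable]: "(\<lambda>z. (\<Sum>x'\<in>{1,2}. f (x', Defs.shift s p z))) \<in> borel_measurable lborel"
      using comp_shift_meas[OF s f] by (intro borel_measurable_sum) auto
    have "(\<integral>\<^sup>+ z. ennreal C * H (w(k := z)) \<partial>lborel)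
        \<le> (\<integral>\<^sup>+ z. ennreal (exp (- e * (L1 k w)\<^sup>2)) * (ennreal (a * exp (- c * z\<^sup>2) * exp (- c * (L1 s p)\<^sup>2)) * (\<Sum>x'\<in>{1,2}. f (x', Defs.shift s p z))) \<partial>lborel)"
    proof (rule nn_integral_mono)
      fix z
      have "C * exp (- e' * (L1 (Suc k) (w(k := z)))\<^sup>2) \<le> exp (- e * (L1 k w)\<^sup>2) * (a * exp (- c * z\<^sup>2) * exp (- c * (L1 s p)\<^sup>2))"
        unfolding C_def e'_def L1_upd using key_ineq[of a c e "L1 k w" "L1 s p" "L1 s y" z] ac De Lp Ly by auto
      then have "ennreal (C * exp (- e' * (L1 (Suc k) (w(k := z)))\<^sup>2)) \<le> ennreal (exp (- e * (L1 k w)\<^sup>2) * (a * exp (- c * z\<^sup>2) * exp (- c * (L1 s p)\<^sup>2)))"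
        by (rule ennreal_leI)
      then have "ennreal (C * exp (- e' * (L1 (Suc k) (w(k := z)))\<^sup>2)) * (\<Sum>x'\<in>{1,2}. f (x', Defs.shift s p z)) \<le> ennreal (exp (- e * (L1 k w)\<^sup>2) * (a * exp (- c * z\<^sup>2) * exp (- c * (L1 s p)\<^sup>2))) * (\<Sum>x'\<in>{1,2}. f (x', Defs.shift s p z))"
        by (rule mult_right_mono) simp
      moreover have "Defs.shift s p z = shiftk s (Suc k) y (w(k := z))" unfolding p_def using shift_shiftk[of k s y w z] k by simp
      ultimately show "ennreal C * H (w(k := z)) \<le> ennreal (exp (- e * (L1 k w)\<^sup>2)) * (ennreal (a * exp (- c * z\<^sup>2) * exp (- c * (L1 s p)\<^sup>2)) * (\<Sum>x'\<in>{1,2}. f (x', Defs.shift s p z)))"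
        unfolding H_def using C ac by (simp add: ennreal_mult mult_ac)
    qed
    also have "\<dots> = ennreal (exp (- e * (L1 k w)\<^sup>2)) * (\<integral>\<^sup>+ z. ennreal (a * exp (- c * z\<^sup>2) * exp (- c * (L1 s p)\<^sup>2)) * (\<Sum>x'\<in>{1,2}. f (x', Defs.shift s p z)) \<partial>lborel)"
      by (intro nn_integral_cmult) measurable
    also have "\<dots> \<le> ennreal (exp (- e * (L1 k w)\<^sup>2)) * F1 (1, p)"
      using one x f unfolding F1_def by (intro mult_left_mono) auto
    also have "\<dots> \<le> ennreal (exp (- e * (L1 k w)\<^sup>2)) * (\<Sum>x'\<in>{1,2}. F1 (x', p))"
      by (intro mult_left_mono) auto
    finally show ?thesis unfolding p_def .
  qed
  have A1: "(msar_step s r \<theta> ^^ Suc k) f (x, y) = (msar_step s r \<theta> ^^ k) F1 (x, y)"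
    unfolding F1_def by (simp add: funpow_Suc_right del: funpow.simps)
  have A2: "(msar_step s r \<theta> ^^ k) F1 (x, y) \<ge> ennreal (D * exp (- e * (L1 s y)\<^sup>2)) *
        (\<integral>\<^sup>+ w. ennreal (exp (- e * (L1 k w)\<^sup>2)) * (\<Sum>x'\<in>{1,2}. F1 (x', shiftk s k y w)) \<partial>Pk k)"
    using IH x F1m by auto
  have A3: "(\<integral>\<^sup>+ w. ennreal (exp (- e * (L1 k w)\<^sup>2)) * (\<Sum>x'\<in>{1,2}. F1 (x', shiftk s k y w)) \<partial>Pk k)
      \<ge> (\<integral>\<^sup>+ w. (\<integral>\<^sup>+ z. ennreal C * H (w(k := z)) \<partial>lborel) \<partial>Pk k)"
    by (intro nn_integral_mono pw)
  have A4: "(\<integral>\<^sup>+ w. (\<integral>\<^sup>+ z. ennreal C * H (w(k := z)) \<partial>lborel) \<partial>Pk k) = (\<integral>\<^sup>+ v. ennreal C * H v \<partial>Pk (Suc k))"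
  proof -
    have e: "{..<Suc k} = insert k {..<k}" by auto
    show ?thesis unfolding e by (rule PL.product_nn_integral_insert[symmetric]) (auto simp: e[symmetric])
  qed
  have A5: "(\<integral>\<^sup>+ v. ennreal C * H v \<partial>Pk (Suc k)) = ennreal C * integral\<^sup>N (Pk (Suc k)) H"
    by (intro nn_integral_cmult) measurable
  have A6: "(msar_step s r \<theta> ^^ Suc k) f (x, y) \<ge> ennreal (D * exp (- e * (L1 s y)\<^sup>2)) * (ennreal C * integral\<^sup>N (Pk (Suc k)) H)"
  proof -
    have "ennreal (D * exp (- e * (L1 s y)\<^sup>2)) * (ennreal C * integral\<^sup>N (Pk (Suc k)) H)
       \<le> ennreal (D * exp (- e * (L1 s y)\<^sup>2)) * (\<integral>\<^sup>+ w. ennreal (exp (- e * (L1 k w)\<^sup>2)) * (\<Sum>x'\<in>{1,2}. F1 (x', shiftk s k y w)) \<partial>Pk k)"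
      using A3 unfolding A4 A5 by (rule mult_left_mono) simp
    also have "\<dots> \<le> (msar_step s r \<theta> ^^ Suc k) f (x, y)" using A2 unfolding A1 .
    finally show ?thesis .
  qed
  have A7: "ennreal (D * exp (- e * (L1 s y)\<^sup>2)) * (ennreal C * integral\<^sup>N (Pk (Suc k)) H)
      \<ge> ennreal ((D * a) * exp (- e' * (L1 s y)\<^sup>2)) * integral\<^sup>N (Pk (Suc k)) H"
  proof -
    have "(D * a) * exp (- e' * (L1 s y)\<^sup>2) \<le> D * exp (- e * (L1 s y)\<^sup>2) * C"
    proof -
      have "- e' * (L1 s y)\<^sup>2 \<le> - e * (L1 s y)\<^sup>2 + - (2 * c) * (L1 s y)\<^sup>2"
        unfolding e'_def using ac by (simp add: algebra_simps)
      then have "exp (- e' * (L1 s y)\<^sup>2) \<le> exp (- e * (L1 s y)\<^sup>2) * exp (- (2 * c) * (L1 s y)\<^sup>2)"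
        by (simp add: exp_add[symmetric])
      then have "(D * a) * exp (- e' * (L1 s y)\<^sup>2) \<le> (D * a) * (exp (- e * (L1 s y)\<^sup>2) * exp (- (2 * c) * (L1 s y)\<^sup>2))"
        using ac De by (intro mult_left_mono) auto
      then show ?thesis unfolding C_def by (simp add: mult_ac)
    qed
    then have "ennreal ((D * a) * exp (- e' * (L1 s y)\<^sup>2)) \<le> ennreal (D * exp (- e * (L1 s y)\<^sup>2)) * ennreal C"
      using De C by (simp add: ennreal_mult[symmetric] ennreal_leI)
    then have "ennreal ((D * a) * exp (- e' * (L1 s y)\<^sup>2)) * integral\<^sup>N (Pk (Suc k)) H \<le> (ennreal (D * exp (- e * (L1 s y)\<^sup>2)) * ennreal C) * integral\<^sup>N (Pk (Suc k)) H"
      by (rule mult_right_mono) simp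
    then show ?thesis by (simp add: mult.assoc)
  qed
  from A7 A6 have "ennreal ((D * a) * exp (- e' * (L1 s y)\<^sup>2)) * integral\<^sup>N (Pk (Suc k)) H \<le> (msar_step s r \<theta> ^^ Suc k) f (x, y)"
    by (rule order_trans)
  then show ?thesis unfolding H_def e'_def .
qed


lemma kstep:
  assumes s: "1 \<le> s" and r: "1 \<le> r" "r \<le> s" and th: "\<theta> \<in> theta_tilde"
  shows "1 \<le> k \<Longrightarrow> k \<le> s \<Longrightarrow> \<exists>D e. D > 0 \<and> e > 0 \<and> (\<forall>x\<in>{1,2}. \<forall>y. \<forall>f\<in>borel_measurable (state_space s).
     (msar_step s r \<theta> ^^ k) f (x, y) \<ge> ennreal (D * exp (- e * (L1 s y)\<^sup>2)) *
        (\<integral>\<^sup>+ w. ennreal (exp (- e * (L1 k w)\<^sup>2)) * (\<Sum>x'\<in>{1,2}. f (x', shiftk s k y w)) \<partial>Pk k))"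
proof (induction k)
  case 0
  then show ?case by simp
next
  case (Suc k)
  obtain a c where ac: "a > 0" "c > 0" and one: "\<forall>x\<in>{1,2}. \<forall>y. \<forall>f \<in> borel_measurable (state_space s).
     msar_step s r \<theta> f (x, y) \<ge> (\<integral>\<^sup>+ z. ennreal (a * exp (- c * z\<^sup>2) * exp (- c * (L1 s y)\<^sup>2)) * (\<Sum>x'\<in>{1,2}. f (x', Defs.shift s y z)) \<partial>lborel)"
    using one_step[OF s th, of r] by blast
  show ?case
  proof (cases "k = 0")
    case True
    have "(msar_step s r \<theta> ^^ Suc k) f (x, y) \<ge> ennreal (a * exp (- c * (L1 s y)\<^sup>2)) *
        (\<integral>\<^sup>+ w. ennreal (exp (- c * (L1 (Suc k) w)\<^sup>2)) * (\<Sum>x'\<in>{1,2}. f (x', shiftk s (Suc k) y w)) \<partial>Pk (Suc k))"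
      if "x \<in> {1,2}" "f \<in> borel_measurable (state_space s)" for x y f
    proof -
      have "msar_step s r \<theta> f (x, y) \<ge> (\<integral>\<^sup>+ z. ennreal (a * exp (- c * z\<^sup>2) * exp (- c * (L1 s y)\<^sup>2)) * (\<Sum>x'\<in>{1,2}. f (x', Defs.shift s y z)) \<partial>lborel)"
        using one that by blast
      then show ?thesis using base_step[OF s that(2), of c a y] ac True by simp
    qed
    then show ?thesis using ac by blast
  next
    case False
    then obtain D e where De: "D > 0" "e > 0" and IH: "\<forall>x\<in>{1,2}. \<forall>y. \<forall>f\<in>borel_measurable (state_space s).
     (msar_step s r \<theta> ^^ k) f (x, y) \<ge> ennreal (D * exp (- e * (L1 s y)\<^sup>2)) *
        (\<integral>\<^sup>+ w. ennreal (exp (- e * (L1 k w)\<^sup>2)) * (\<Sum>x'\<in>{1,2}. f (x', shiftk s k y w)) \<partial>Pk k)"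
      using Suc by auto
    have k: "1 \<le> k" "Suc k \<le> s" using False Suc by auto
    have "D * a > 0" "e + 3 * c > 0" using De ac by auto
    then show ?thesis using ind_step[OF s r k ac De one IH] by blast
  qed
qed

definition Jint :: "nat \<Rightarrow> real \<Rightarrow> (nat \<times> (nat \<Rightarrow> real) \<Rightarrow> ennreal) \<Rightarrow> ennreal" where
  "Jint s e f = (\<integral>\<^sup>+ w. ennreal (exp (- e * (L1 s w)\<^sup>2)) * (\<Sum>x'\<in>{1,2}. f (x', w)) \<partial>Rs s)"

lemma L1_shift: "1 \<le> s \<Longrightarrow> L1 s (Defs.shift s y z) \<le> L1 s y + \<bar>z\<bar>"
  using L1_shiftk[of 1 s y "(\<lambda>_. undefined)(0 := z)"] shiftk_1[of s y z] by (simp add: L1_def)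

lemma lower_sn:
  assumes s: "1 \<le> s" and r: "1 \<le> r" "r \<le> s" and th: "\<theta> \<in> theta_tilde"
  shows "\<exists>e>0. \<forall>B\<ge>0. \<exists>K1>0. \<exists>K2>0. \<forall>x\<in>{1,2}. \<forall>y. L1 s y \<le> B \<longrightarrow> (\<forall>f\<in>borel_measurable (state_space s).
     (msar_step s r \<theta> ^^ s) f (x, y) \<ge> ennreal K1 * Jint s e f \<and> (msar_step s r \<theta> ^^ Suc s) f (x, y) \<ge> ennreal K2 * Jint s e f)"
proof -
  obtain D e where De: "D > 0" "e > 0" and ks: "\<forall>x\<in>{1,2}. \<forall>y. \<forall>f\<in>borel_measurable (state_space s).
     (msar_step s r \<theta> ^^ s) f (x, y) \<ge> ennreal (D * exp (- e * (L1 s y)\<^sup>2)) *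
        (\<integral>\<^sup>+ w. ennreal (exp (- e * (L1 s w)\<^sup>2)) * (\<Sum>x'\<in>{1,2}. f (x', shiftk s s y w)) \<partial>Pk s)"
    using kstep[OF s r th, of s] s by blast
  obtain a c where ac: "a > 0" "c > 0" and one: "\<forall>x\<in>{1,2}. \<forall>y. \<forall>f \<in> borel_measurable (state_space s).
     msar_step s r \<theta> f (x, y) \<ge> (\<integral>\<^sup>+ z. ennreal (a * exp (- c * z\<^sup>2) * exp (- c * (L1 s y)\<^sup>2)) * (\<Sum>x'\<in>{1,2}. f (x', Defs.shift s y z)) \<partial>lborel)"
    using one_step[OF s th, of r] by blast
  have ksJ: "(msar_step s r \<theta> ^^ s) f (x, y) \<ge> ennreal (D * exp (- e * (L1 s y)\<^sup>2)) * Jint s e f"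
    if "x \<in> {1,2}" "f \<in> borel_measurable (state_space s)" for x y f
  proof -
    have "(\<integral>\<^sup>+ w. ennreal (exp (- e * (L1 s w)\<^sup>2)) * (\<Sum>x'\<in>{1,2}. f (x', shiftk s s y w)) \<partial>Pk s) = Jint s e f"
      unfolding Jint_def Rs_def by (intro nn_integral_cong) (simp add: shiftk_s[unfolded Rs_def])
    moreover have "(msar_step s r \<theta> ^^ s) f (x, y) \<ge> ennreal (D * exp (- e * (L1 s y)\<^sup>2)) *
        (\<integral>\<^sup>+ w. ennreal (exp (- e * (L1 s w)\<^sup>2)) * (\<Sum>x'\<in>{1,2}. f (x', shiftk s s y w)) \<partial>Pk s)"
      using ks that by blast
    ultimately show ?thesis by simp
  qed
  have "\<exists>K1>0. \<exists>K2>0. \<forall>x\<in>{1,2}. \<forall>y. L1 s y \<le> B \<longrightarrow> (\<forall>f\<in>borel_measurable (state_space s).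
     (msar_step s r \<theta> ^^ s) f (x, y) \<ge> ennreal K1 * Jint s e f \<and> (msar_step s r \<theta> ^^ Suc s) f (x, y) \<ge> ennreal K2 * Jint s e f)"
    if B: "B \<ge> 0" for B
  proof -
    define K1 where "K1 = D * exp (- e * B\<^sup>2)"
    define K2 where "K2 = a * exp (- c) * exp (- c * B\<^sup>2) * (D * exp (- e * (B + 1)\<^sup>2))"
    have K: "K1 > 0" "K2 > 0" using De ac by (auto simp: K1_def K2_def)
    have "(msar_step s r \<theta> ^^ s) f (x, y) \<ge> ennreal K1 * Jint s e f \<and> (msar_step s r \<theta> ^^ Suc s) f (x, y) \<ge> ennreal K2 * Jint s e f"
      if x: "x \<in> {1,2}" and y: "L1 s y \<le> B" and f: "f \<in> borel_measurable (state_space s)" for x y f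
    proof
      have L0: "0 \<le> L1 s y" by (rule L1_nonneg)
      have yB: "(L1 s y)\<^sup>2 \<le> B\<^sup>2" using power_mono[OF y L0] .
      have k1: "K1 \<le> D * exp (- e * (L1 s y)\<^sup>2)"
        unfolding K1_def using De yB by (intro mult_left_mono) (auto simp: mult_left_mono)
      have "ennreal K1 * Jint s e f \<le> ennreal (D * exp (- e * (L1 s y)\<^sup>2)) * Jint s e f"
        by (rule mult_right_mono[OF ennreal_leI[OF k1]]) simp
      then show "(msar_step s r \<theta> ^^ s) f (x, y) \<ge> ennreal K1 * Jint s e f"
        using ksJ[OF x f, of y] by (rule order_trans)
      define g where "g = (msar_step s r \<theta> ^^ s) f"
      have gm: "g \<in> borel_measurable (state_space s)" unfolding g_def by (rule stepn_meas[OF s r f])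
      have "(msar_step s r \<theta> ^^ Suc s) f (x, y) = msar_step s r \<theta> g (x, y)" unfolding g_def by simp
      also have "\<dots> \<ge> (\<integral>\<^sup>+ z. ennreal (a * exp (- c * z\<^sup>2) * exp (- c * (L1 s y)\<^sup>2)) * (\<Sum>x'\<in>{1,2}. g (x', Defs.shift s y z)) \<partial>lborel)"
        using one x gm by blast
      moreover have "(\<integral>\<^sup>+ z. ennreal (a * exp (- c * z\<^sup>2) * exp (- c * (L1 s y)\<^sup>2)) * (\<Sum>x'\<in>{1,2}. g (x', Defs.shift s y z)) \<partial>lborel)
          \<ge> (\<integral>\<^sup>+ z. (ennreal K2 * Jint s e f) * indicator {0..1::real} z \<partial>lborel)"
      proof (rule nn_integral_mono)
        fix z :: real
        show "(ennreal K2 * Jint s e f) * indicator {0..1} z \<le> ennreal (a * exp (- c * z\<^sup>2) * exp (- c * (L1 s y)\<^sup>2)) * (\<Sum>x'\<in>{1,2}. g (x', Defs.shift s y z))"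
        proof (cases "z \<in> {0..1}")
          case True
          have Ls: "L1 s (Defs.shift s y z) \<le> B + 1" using L1_shift[OF s, of y z] y True by auto
          have Ls0: "0 \<le> L1 s (Defs.shift s y z)" by (rule L1_nonneg)
          have z2: "z\<^sup>2 \<le> 1" using True by (auto simp: power_le_one)
          have yB: "(L1 s y)\<^sup>2 \<le> B\<^sup>2" using power_mono[OF y L0] .
          have e1: "exp (- c) \<le> exp (- c * z\<^sup>2)" using z2 ac by (simp add: mult_left_mono)
          have e2: "exp (- c * B\<^sup>2) \<le> exp (- c * (L1 s y)\<^sup>2)" using yB ac by (simp add: mult_left_mono)
          have r1: "a * exp (- c) * exp (- c * B\<^sup>2) \<le> a * exp (- c * z\<^sup>2) * exp (- c * (L1 s y)\<^sup>2)"
            using ac by (intro mult_mono e1 e2 mult_left_mono) auto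
          have LsB: "(L1 s (Defs.shift s y z))\<^sup>2 \<le> (B + 1)\<^sup>2" using power_mono[OF Ls Ls0] .
          have r2: "D * exp (- e * (B + 1)\<^sup>2) \<le> D * exp (- e * (L1 s (Defs.shift s y z))\<^sup>2)"
            using De LsB by (intro mult_left_mono) (auto simp: mult_left_mono)
          have "ennreal K2 * Jint s e f \<le> ennreal (a * exp (- c * z\<^sup>2) * exp (- c * (L1 s y)\<^sup>2)) * (ennreal (D * exp (- e * (L1 s (Defs.shift s y z))\<^sup>2)) * Jint s e f)"
          proof -
            have e1: "ennreal K2 = ennreal (a * exp (- c) * exp (- c * B\<^sup>2)) * ennreal (D * exp (- e * (B + 1)\<^sup>2))"
              unfolding K2_def using ac De by (intro ennreal_mult) auto
            have "ennreal (a * exp (- c) * exp (- c * B\<^sup>2)) * (ennreal (D * exp (- e * (B + 1)\<^sup>2)) * Jint s e f)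
               \<le> ennreal (a * exp (- c * z\<^sup>2) * exp (- c * (L1 s y)\<^sup>2)) * (ennreal (D * exp (- e * (L1 s (Defs.shift s y z))\<^sup>2)) * Jint s e f)"
              by (rule mult_mono[OF ennreal_leI[OF r1] mult_right_mono[OF ennreal_leI[OF r2]]]) auto
            then show ?thesis unfolding e1 by (simp add: mult.assoc)
          qed
          also have "\<dots> \<le> ennreal (a * exp (- c * z\<^sup>2) * exp (- c * (L1 s y)\<^sup>2)) * g (1, Defs.shift s y z)"
            unfolding g_def by (intro mult_left_mono ksJ f) auto
          also have "\<dots> \<le> ennreal (a * exp (- c * z\<^sup>2) * exp (- c * (L1 s y)\<^sup>2)) * (\<Sum>x'\<in>{1,2}. g (x', Defs.shift s y z))"
            by (intro mult_left_mono) auto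
          finally show ?thesis using True by simp
        qed simp
      qed
      moreover have "(\<integral>\<^sup>+ z. (ennreal K2 * Jint s e f) * indicator {0..1::real} z \<partial>lborel) = ennreal K2 * Jint s e f"
        by (subst nn_integral_cmult_indicator) auto
      ultimately show "(msar_step s r \<theta> ^^ Suc s) f (x, y) \<ge> ennreal K2 * Jint s e f"
        by (simp add: order_trans)
    qed
    then show ?thesis using K by blast
  qed
  then show ?thesis using De by blast
qed


definition zvec :: "nat \<Rightarrow> nat \<Rightarrow> real" where "zvec s = restrict (\<lambda>_. 0) {..<s}"
definition evec :: "nat \<Rightarrow> nat \<Rightarrow> nat \<Rightarrow> real" where "evec s k = restrict (\<lambda>j. if j = k then 1 else 0) {..<s}"

lemma restrict_space: "y \<in> space (Rs s) \<Longrightarrow> restrict y {..<s} = y"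
  by (auto simp: space_Rs fun_eq_iff PiE_def extensional_def)

lemma restrict_in_space: "restrict f {..<s} \<in> space (Rs s)"
  by (simp add: space_Rs)

context
  fixes s :: nat and N :: "(nat \<Rightarrow> real) \<Rightarrow> real"
  assumes N: "is_norm_Rs s N"
begin

lemma N_zero: "N (zvec s) = 0"
  using N unfolding is_norm_Rs_def zvec_def by (auto simp: space_Rs)

lemma N_hom: "y \<in> space (Rs s) \<Longrightarrow> N (restrict (\<lambda>i. c * y i) {..<s}) = \<bar>c\<bar> * N y"
  using N unfolding is_norm_Rs_def by auto

lemma N_tri: "y \<in> space (Rs s) \<Longrightarrow> z \<in> space (Rs s) \<Longrightarrow> N (restrict (\<lambda>i. y i + z i) {..<s}) \<le> N y + N z"
  using N unfolding is_norm_Rs_def by auto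

lemma N_eq0: "y \<in> space (Rs s) \<Longrightarrow> N y = 0 \<longleftrightarrow> y = zvec s"
  using N unfolding is_norm_Rs_def zvec_def by auto

lemma N_nonneg: assumes y: "y \<in> space (Rs s)" shows "0 \<le> N y"
proof -
  have "restrict (\<lambda>i. y i + restrict (\<lambda>i. (-1) * y i) {..<s} i) {..<s} = zvec s"
    by (auto simp: zvec_def fun_eq_iff)
  then have "N (zvec s) \<le> N y + N (restrict (\<lambda>i. (-1) * y i) {..<s})"
    using N_tri[OF y restrict_in_space] by metis
  then show ?thesis using N_zero N_hom[OF y, of "-1"] by simp
qed

definition Mc where "Mc = (\<Sum>j<s. N (evec s j)) + 1"

lemma Mc_pos: "Mc > 0" and Ne_le: "j < s \<Longrightarrow> N (evec s j) \<le> Mc"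
proof -
  have nn: "\<And>j. 0 \<le> N (evec s j)" using N_nonneg evec_def restrict_in_space by metis
  then show "Mc > 0" unfolding Mc_def by (simp add: sum_nonneg add_nonneg_pos)
  show "j < s \<Longrightarrow> N (evec s j) \<le> Mc" unfolding Mc_def
    using member_le_sum[of j "{..<s}" "\<lambda>j. N (evec s j)"] nn by fastforce
qed

lemma N_le_L1: assumes y: "y \<in> space (Rs s)" shows "N y \<le> Mc * L1 s y"
proof -
  have "k \<le> s \<Longrightarrow> N (restrict (\<lambda>i. if i < k then y i else 0) {..<s}) \<le> (\<Sum>i<k. \<bar>y i\<bar> * N (evec s i))" for k
  proof (induction k)
    case 0
    have "restrict (\<lambda>i. if i < 0 then y i else 0) {..<s} = zvec s" by (simp add: zvec_def)
    then show ?case using N_zero by simp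
  next
    case (Suc k)
    have eq: "restrict (\<lambda>i. restrict (\<lambda>i. if i < k then y i else 0) {..<s} i + restrict (\<lambda>i. y k * evec s k i) {..<s} i) {..<s}
       = restrict (\<lambda>i. if i < Suc k then y i else 0) {..<s}"
      by (auto simp: fun_eq_iff evec_def less_Suc_eq)
    have "N (restrict (\<lambda>i. if i < Suc k then y i else 0) {..<s}) \<le> N (restrict (\<lambda>i. if i < k then y i else 0) {..<s}) + N (restrict (\<lambda>i. y k * evec s k i) {..<s})"
      using N_tri[OF restrict_in_space restrict_in_space] eq by metis
    also have "N (restrict (\<lambda>i. y k * evec s k i) {..<s}) = \<bar>y k\<bar> * N (evec s k)"
      using N_hom[of "evec s k" "y k"] by (simp add: evec_def restrict_in_space)
    finally show ?case using Suc by simp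
  qed
  from this[of s] have "N y \<le> (\<Sum>i<s. \<bar>y i\<bar> * N (evec s i))"
    using restrict_space[OF y] by (simp cong: restrict_cong)
  also have "\<dots> \<le> (\<Sum>i<s. \<bar>y i\<bar> * Mc)" by (intro sum_mono mult_left_mono Ne_le) auto
  also have "\<dots> = Mc * L1 s y" by (simp add: L1_def sum_distrib_left mult.commute)
  finally show ?thesis .
qed


lemma N_lip: assumes x: "x \<in> space (Rs s)" and y: "y \<in> space (Rs s)"
  shows "\<bar>N y - N x\<bar> \<le> Mc * (\<Sum>i<s. \<bar>y i - x i\<bar>)"
proof -
  have a: "N y - N x \<le> Mc * (\<Sum>i<s. \<bar>y i - x i\<bar>)" if x: "x \<in> space (Rs s)" and y: "y \<in> space (Rs s)" for x y
  proof -
    define d where "d = restrict (\<lambda>i. y i - x i) {..<s}"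
    have d: "d \<in> space (Rs s)" unfolding d_def by (rule restrict_in_space)
    have "restrict (\<lambda>i. x i + d i) {..<s} = restrict y {..<s}"
      by (auto simp: d_def fun_eq_iff)
    then have "restrict (\<lambda>i. x i + d i) {..<s} = y" using restrict_space[OF y] by simp
    then have "N y \<le> N x + N d" using N_tri[OF x d] by metis
    moreover have "N d \<le> Mc * L1 s d" by (rule N_le_L1[OF d])
    moreover have "L1 s d = (\<Sum>i<s. \<bar>y i - x i\<bar>)" unfolding L1_def d_def by simp
    ultimately show ?thesis by simp
  qed
  have "(\<Sum>i<s. \<bar>x i - y i\<bar>) = (\<Sum>i<s. \<bar>y i - x i\<bar>)" by (simp add: abs_minus_commute)
  then show ?thesis using a[OF x y] a[OF y x] by (simp add: abs_le_iff)
qed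

lemma N_cont: "continuous_map (product_topology (\<lambda>_. euclideanreal) {..<s}) euclideanreal N"
  unfolding continuous_map_atin limitin_canonical_iff tendsto_iff
proof (intro ballI allI impI)
  let ?X = "product_topology (\<lambda>_. euclideanreal) {..<s}"
  fix x e assume x: "x \<in> topspace ?X" and e: "(e::real) > 0"
  have xs: "x \<in> space (Rs s)" using x by (simp add: space_Rs)
  define g where "g = (\<lambda>y. \<Sum>i<s. \<bar>y i - x i\<bar>)"
  have gc: "continuous_map ?X euclideanreal g" unfolding g_def
    by (intro continuous_intros) auto
  define U where "U = {y \<in> topspace ?X. g y \<in> {..<e / Mc}}"
  have "openin ?X U" unfolding U_def by (rule openin_continuous_map_preimage[OF gc]) auto
  moreover have "x \<in> U" using x e Mc_pos by (simp add: U_def g_def)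
  moreover have "dist (N y) (N x) < e" if "y \<in> U" for y
  proof -
    have ys: "y \<in> space (Rs s)" using that by (simp add: U_def space_Rs)
    have "g y < e / Mc" using that by (simp add: U_def)
    then have "Mc * g y < e" using Mc_pos by (simp add: field_simps)
    then show ?thesis using N_lip[OF xs ys] by (simp add: dist_real_def g_def)
  qed
  ultimately show "\<forall>\<^sub>F y in atin ?X x. dist (N y) (N x) < e"
    unfolding eventually_atin by blast
qed

lemma N_lower: assumes s: "1 \<le> s" shows "\<exists>\<kappa>>0. \<forall>y\<in>space (Rs s). \<kappa> * L1 s y \<le> N y"
proof -
  let ?X = "product_topology (\<lambda>_. euclideanreal) {..<s}"
  define S where "S = {y \<in> topspace ?X. L1 s y \<in> {1}}"
  define K where "K = PiE {..<s} (\<lambda>_. {-1..1::real})"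
  have Kc: "compactin ?X K" unfolding K_def by (subst compactin_PiE) auto
  have L1c: "continuous_map ?X euclideanreal (L1 s)" unfolding L1_def[abs_def]
    by (intro continuous_intros) auto
  have Sc: "closedin ?X S" unfolding S_def by (rule closedin_continuous_map_preimage[OF L1c]) auto
  have SK: "S \<subseteq> K"
  proof
    fix y assume "y \<in> S"
    then have "y \<in> topspace ?X" "L1 s y = 1" by (auto simp: S_def)
    then show "y \<in> K" using abs_le_L1[of _ s y] by (auto simp: K_def PiE_def Pi_def abs_le_iff)
  qed
  have cS: "compactin ?X S" using closed_compactin[OF Kc SK Sc] .
  have "compactin euclideanreal (N ` S)" using image_compactin[OF cS N_cont] .
  then have cNS: "compact (N ` S)" by simp
  have e0: "evec s 0 \<in> S"
  proof -
    have "L1 s (evec s 0) = (\<Sum>i<s. if i = 0 then 1 else 0)" unfolding L1_def evec_def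
      by (intro sum.cong) auto
    also have "\<dots> = 1" using s by simp
    finally show ?thesis unfolding S_def evec_def by (auto simp: PiE_def)
  qed
  obtain m where m: "m \<in> N ` S" "\<And>t. t \<in> N ` S \<Longrightarrow> m \<le> t"
    using compact_attains_inf[OF cNS] e0 by blast
  then obtain ys where ys: "ys \<in> S" "m = N ys" by blast
  have yss: "ys \<in> space (Rs s)" using ys by (simp add: S_def space_Rs)
  have "ys \<noteq> zvec s"
  proof
    assume "ys = zvec s"
    then have "L1 s ys = 0" by (simp add: L1_def zvec_def)
    then show False using ys by (simp add: S_def)
  qed
  then have mpos: "m > 0" using N_eq0[OF yss] N_nonneg[OF yss] ys by simp
  have "m * L1 s y \<le> N y" if y: "y \<in> space (Rs s)" for y
  proof (cases "L1 s y = 0")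
    case True then show ?thesis using N_nonneg[OF y] by simp
  next
    case False
    define t where "t = L1 s y"
    have t: "t > 0" using False L1_nonneg[of s y] by (simp add: t_def)
    define y' where "y' = restrict (\<lambda>i. (1 / t) * y i) {..<s}"
    have y'sp: "y' \<in> space (Rs s)" unfolding y'_def by (rule restrict_in_space)
    have "L1 s y' = (1 / t) * L1 s y" unfolding L1_def y'_def using t
      by (simp add: sum_distrib_left abs_mult)
    then have "L1 s y' = 1" using t by (simp add: t_def)
    then have "y' \<in> S" using y'sp by (simp add: S_def space_Rs)
    then have "m \<le> N y'" using m by blast
    also have "N y' = (1 / t) * N y" unfolding y'_def using N_hom[OF y, of "1 / t"] t by simp
    finally have "m * t \<le> N y" using t by (simp add: field_simps)
    then show ?thesis by (simp add: t_def)
  qed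
  then show ?thesis using mpos by blast
qed

end

context
  fixes s :: nat and N :: "(nat \<Rightarrow> real) \<Rightarrow> real"
  assumes N: "is_norm_Rs s N"
begin

lemma ballN_meas: "{y \<in> space (Rs s). N y \<le> R} \<in> sets (Rs s)"
proof -
  define Qs where "Qs = PiE {..<s} (\<lambda>_. \<rat> :: real set)"
  have cQ: "countable Qs" unfolding Qs_def by (intro countable_PiE) (auto simp: countable_rat)
  have Qsp: "Qs \<subseteq> space (Rs s)" unfolding Qs_def space_Rs by (auto simp: PiE_def Pi_def)
  define G where "G m q = {y\<in>space (Rs s). N q + Mc s N * (\<Sum>i<s. \<bar>y i - q i\<bar>) < R + 1 / real (Suc m)}" for m q
  have Gm: "G m q \<in> sets (Rs s)" for m q
  proof -
    have [measurable]: "(\<lambda>y. y i) \<in> borel_measurable (Rs s)" if "i < s" for i using comp_meas that .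
    have [measurable]: "(\<lambda>y. N q + Mc s N * (\<Sum>i<s. \<bar>y i - q i\<bar>)) \<in> borel_measurable (Rs s)"
      by (intro borel_measurable_add borel_measurable_times borel_measurable_sum borel_measurable_abs borel_measurable_diff) (auto intro: comp_meas)
    show ?thesis unfolding G_def by measurable
  qed
  have eq: "{y \<in> space (Rs s). N y \<le> R} = (\<Inter>m. \<Union>q\<in>Qs. G m q)"
  proof (intro equalityI subsetI)
    fix y assume "y \<in> {y \<in> space (Rs s). N y \<le> R}"
    then have y: "y \<in> space (Rs s)" "N y \<le> R" by auto
    show "y \<in> (\<Inter>m. \<Union>q\<in>Qs. G m q)"
    proof
      fix m
      define \<delta> where "\<delta> = 1 / real (Suc m)"
      have \<delta>: "\<delta> > 0" by (simp add: \<delta>_def)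
      obtain n :: nat where n: "2 * Mc s N * real s / \<delta> < real n" using reals_Archimedean2 by blast
      have npos: "real n > 0" using n \<delta> Mc_pos[OF N] by (smt (verit) divide_nonneg_pos mult_nonneg_nonneg of_nat_0_le_iff)
      define q where "q = restrict (\<lambda>i. real_of_int \<lfloor>real n * y i\<rfloor> / real n) {..<s}"
      have qQ: "q \<in> Qs" unfolding q_def Qs_def by (auto simp: PiE_def Pi_def)
      have qs: "q \<in> space (Rs s)" using qQ Qsp by auto
      have dq: "\<bar>y i - q i\<bar> \<le> 1 / real n" if "i < s" for i
      proof -
        have "real_of_int \<lfloor>real n * y i\<rfloor> \<le> real n * y i" "real n * y i < real_of_int \<lfloor>real n * y i\<rfloor> + 1"
          by linarith+
        then have "0 \<le> real n * y i - real_of_int \<lfloor>real n * y i\<rfloor>" "real n * y i - real_of_int \<lfloor>real n * y i\<rfloor> \<le> 1" by linarith+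
        moreover have "y i - real_of_int \<lfloor>real n * y i\<rfloor> / real n = (real n * y i - real_of_int \<lfloor>real n * y i\<rfloor>) / real n"
          using npos by (simp add: field_simps)
        ultimately have "0 \<le> y i - real_of_int \<lfloor>real n * y i\<rfloor> / real n" "y i - real_of_int \<lfloor>real n * y i\<rfloor> / real n \<le> 1 / real n"
          using npos by (simp_all add: divide_right_mono)
        then show ?thesis using that by (simp add: q_def)
      qed
      have S: "(\<Sum>i<s. \<bar>y i - q i\<bar>) \<le> real s / real n"
      proof -
        have "(\<Sum>i<s. \<bar>y i - q i\<bar>) \<le> (\<Sum>i<s. 1 / real n)" by (intro sum_mono dq) auto
        then show ?thesis by simp
      qed
      have "Mc s N * (real s / real n) < \<delta> / 2"
        using n npos \<delta> Mc_pos[OF N] by (simp add: field_simps)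
      then have MS: "Mc s N * (\<Sum>i<s. \<bar>y i - q i\<bar>) < \<delta> / 2"
        using S Mc_pos[OF N] by (smt (verit) mult_left_mono)
      have "\<bar>N q - N y\<bar> \<le> Mc s N * (\<Sum>i<s. \<bar>q i - y i\<bar>)" by (rule N_lip[OF N y(1) qs])
      also have "(\<Sum>i<s. \<bar>q i - y i\<bar>) = (\<Sum>i<s. \<bar>y i - q i\<bar>)" by (simp add: abs_minus_commute)
      finally have "N q + Mc s N * (\<Sum>i<s. \<bar>y i - q i\<bar>) < R + \<delta>" using MS y(2) by linarith
      then have "y \<in> G m q" using y by (simp add: G_def \<delta>_def)
      then show "y \<in> (\<Union>q\<in>Qs. G m q)" using qQ by blast
    qed
  next
    fix y assume y: "y \<in> (\<Inter>m. \<Union>q\<in>Qs. G m q)"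
    then have ys: "y \<in> space (Rs s)" by (auto simp: G_def)
    have lt: "N y < R + 1 / real (Suc m)" for m
    proof -
      obtain q where q: "q \<in> Qs" "y \<in> G m q" using y by blast
      have qs: "q \<in> space (Rs s)" using q Qsp by auto
      have "\<bar>N y - N q\<bar> \<le> Mc s N * (\<Sum>i<s. \<bar>y i - q i\<bar>)" by (rule N_lip[OF N qs ys])
      moreover have "N q + Mc s N * (\<Sum>i<s. \<bar>y i - q i\<bar>) < R + 1 / real (Suc m)" using q(2) by (simp add: G_def)
      ultimately show ?thesis by linarith
    qed
    have "N y \<le> R"
    proof (rule ccontr)
      assume "\<not> N y \<le> R"
      then have "0 < N y - R" by simp
      then obtain m where "inverse (real (Suc m)) < N y - R" using reals_Archimedean by blast
      then show False using lt[of m] by (simp add: field_simps)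
    qed
    then show "y \<in> {y \<in> space (Rs s). N y \<le> R}" using ys by simp
  qed
  have "(\<Inter>m. \<Union>q\<in>Qs. G m q) \<in> sets (Rs s)"
  proof (intro sets.countable_INT')
    show "range (\<lambda>m. \<Union>q\<in>Qs. G m q) \<subseteq> sets (Rs s)"
      using sets.countable_UN'[OF cQ, of "G _" "Rs s"] Gm by blast
  qed auto
  then show ?thesis using eq by simp
qed

lemma ball_set_meas: "ball_set s N R \<in> sets (state_space s)"
proof -
  have "ball_set s N R = {1,2} \<times> {y \<in> space (Rs s). N y \<le> R}" unfolding ball_set_def by auto
  then show ?thesis unfolding state_space_def using ballN_meas by (auto intro: pair_measureI)
qed

end


definition nuJ :: "nat \<Rightarrow> real \<Rightarrow> real \<Rightarrow> (nat \<times> (nat \<Rightarrow> real)) measure" where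
  "nuJ s e K = density (state_space s) (\<lambda>p. ennreal (K * exp (- e * (L1 s (snd p))\<^sup>2)))"

lemma sf_Rs: "sigma_finite_measure (Rs s)"
  unfolding Rs_def by (rule PL.sigma_finite) simp

lemma L1_meas_Rs[measurable]: "L1 s \<in> borel_measurable (Rs s)"
  using L1_meas[of s] by (simp add: Rs_def)

lemma dens_meas: "(\<lambda>p. ennreal (K * exp (- e * (L1 s (snd p))\<^sup>2))) \<in> borel_measurable (state_space s)"
  unfolding state_space_def by measurable

lemma fiber_meas: assumes A: "A \<in> sets (state_space s)" and x: "x \<in> {1,2}"
  shows "(\<lambda>w. indicator A (x, w) :: ennreal) \<in> borel_measurable (Rs s)"
proof -
  have "(\<lambda>w. (x, w)) \<in> measurable (Rs s) (state_space s)"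
    unfolding state_space_def using x by (auto intro!: measurable_Pair)
  moreover have "(indicator A :: _ \<Rightarrow> ennreal) \<in> borel_measurable (state_space s)" using A by simp
  ultimately show ?thesis by (rule measurable_compose[of _ _ "state_space s"])
qed

lemma nuJ_emeasure:
  assumes K: "K \<ge> 0" and A: "A \<in> sets (state_space s)"
  shows "emeasure (nuJ s e K) A = ennreal K * Jint s e (indicator A)"
proof -
  interpret R: sigma_finite_measure "Rs s" by (rule sf_Rs)
  let ?f = "\<lambda>p. ennreal (K * exp (- e * (L1 s (snd p))\<^sup>2))"
  have fm: "(\<lambda>p. ?f p * indicator A p) \<in> borel_measurable (count_space {1,2} \<Otimes>\<^sub>M Rs s)"
    using dens_meas[of K e s] A unfolding state_space_def by measurable
  have "emeasure (nuJ s e K) A = (\<integral>\<^sup>+ p. ?f p * indicator A p \<partial>state_space s)"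
    unfolding nuJ_def using A dens_meas by (simp add: emeasure_density)
  also have "\<dots> = (\<integral>\<^sup>+ x. (\<integral>\<^sup>+ w. ?f (x, w) * indicator A (x, w) \<partial>Rs s) \<partial>count_space {1,2})"
    unfolding state_space_def using R.nn_integral_fst[OF fm] by simp
  also have "\<dots> = (\<Sum>x\<in>{1,2::nat}. \<integral>\<^sup>+ w. ?f (x, w) * indicator A (x, w) \<partial>Rs s)"
    by (simp add: nn_integral_count_space_finite)
  also have "\<dots> = (\<integral>\<^sup>+ w. (\<Sum>x\<in>{1,2::nat}. ?f (x, w) * indicator A (x, w)) \<partial>Rs s)"
    using fiber_meas[OF A] by (intro nn_integral_sum[symmetric]) auto
  also have "\<dots> = (\<integral>\<^sup>+ w. ennreal K * (ennreal (exp (- e * (L1 s w)\<^sup>2)) * (\<Sum>x\<in>{1,2::nat}. indicator A (x, w))) \<partial>Rs s)"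
    using K by (intro nn_integral_cong) (simp add: ennreal_mult algebra_simps)
  also have "\<dots> = ennreal K * Jint s e (indicator A)"
    unfolding Jint_def using fiber_meas[OF A]
    by (intro nn_integral_cmult borel_measurable_times borel_measurable_sum) auto
  finally show ?thesis .
qed

lemma nuJ_equiv:
  assumes K: "K > 0"
  shows "equivalent_measures (nuJ s e K) (state_space s)"
  unfolding equivalent_measures_def
proof (intro conjI ballI)
  show "sets (nuJ s e K) = sets (state_space s)" by (simp add: nuJ_def)
  fix A assume A: "A \<in> sets (state_space s)"
  let ?f = "\<lambda>p. ennreal (K * exp (- e * (L1 s (snd p))\<^sup>2))"
  have "emeasure (nuJ s e K) A = (\<integral>\<^sup>+ p. ?f p * indicator A p \<partial>state_space s)"
    unfolding nuJ_def using A dens_meas by (simp add: emeasure_density)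
  also have "\<dots> = 0 \<longleftrightarrow> (AE p in state_space s. ?f p * indicator A p = 0)"
  proof (rule nn_integral_0_iff_AE)
    have [measurable]: "?f \<in> borel_measurable (state_space s)" by (rule dens_meas)
    show "(\<lambda>p. ?f p * indicator A p) \<in> borel_measurable (state_space s)" using A by measurable
  qed
  also have "\<dots> \<longleftrightarrow> (AE p in state_space s. p \<notin> A)"
    using K by (intro AE_cong) (auto simp: indicator_def)
  also have "\<dots> \<longleftrightarrow> emeasure (state_space s) A = 0"
    using A sets.sets_into_space[OF A] by (intro AE_iff_measurable) auto
  finally show "(emeasure (nuJ s e K) A = 0) = (emeasure (state_space s) A = 0)" .
qed

lemma space_state: "space (state_space s) = {1,2} \<times> space (Rs s)"
  by (simp add: state_space_def space_pair_measure)

lemma mu_space_pos: "emeasure (state_space s) (space (state_space s)) > 0"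
proof -
  interpret R: sigma_finite_measure "Rs s" by (rule sf_Rs)
  define C where "C = PiE {..<s} (\<lambda>_. {0..1::real})"
  have C: "C \<in> sets (Rs s)" unfolding C_def Rs_def by (intro sets_PiM_I_finite) auto
  have "emeasure (Rs s) C = (\<Prod>i<s. emeasure lborel {0..1::real})"
    unfolding C_def Rs_def by (rule PL.emeasure_PiM) auto
  then have C1: "emeasure (Rs s) C = 1" by simp
  have "emeasure (state_space s) ({1} \<times> C) = emeasure (count_space {1,2::nat}) {1} * emeasure (Rs s) C"
    unfolding state_space_def using C by (intro R.emeasure_pair_measure_Times) auto
  then have "emeasure (state_space s) ({1} \<times> C) = 1" using C1 by simp
  moreover have "emeasure (state_space s) ({1} \<times> C) \<le> emeasure (state_space s) (space (state_space s))"
  proof (rule emeasure_mono)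
    show "{1} \<times> C \<subseteq> space (state_space s)" using sets.sets_into_space[OF C] by (auto simp: space_state)
  qed simp
  ultimately show ?thesis by (metis not_gr_zero not_one_le_zero)
qed


lemma normal_int1: assumes "\<sigma> > 0" shows "(\<integral>\<^sup>+ z. ennreal (normal_density m \<sigma> z) \<partial>lborel) = 1"
proof -
  interpret P: prob_space "density lborel (\<lambda>z. ennreal (normal_density m \<sigma> z))"
    by (intro prob_space_normal_density assms)
  show ?thesis using P.emeasure_space_1 assms by (simp add: emeasure_density)
qed

lemma step_total:
  assumes th: "\<theta> \<in> theta_tilde" and x: "x \<in> {1,2}"
  shows "msar_step s r \<theta> (\<lambda>_. 1) (x, y) = 1"
proof -
  have "ms_sigma \<theta> x' > 0" if "x' \<in> {1,2}" for x' using th that unfolding theta_tilde_def by auto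
  then show ?thesis unfolding msar_step_def using trans_sum[OF th x] by (simp add: normal_int1)
qed

lemma step_mono:
  assumes "\<And>x' z. x' \<in> {1,2} \<Longrightarrow> g (x', Defs.shift s y z) \<le> h (x', Defs.shift s y z)"
  shows "msar_step s r \<theta> g (x, y) \<le> msar_step s r \<theta> h (x, y)"
  by (simp only: msar_step_def prod.case) (intro sum_mono mult_left_mono nn_integral_mono assms; simp)

lemma Pn_le1:
  assumes th: "\<theta> \<in> theta_tilde" and g: "\<And>p. g p \<le> 1"
  shows "x \<in> {1,2} \<Longrightarrow> (msar_step s r \<theta> ^^ n) g (x, y) \<le> 1"
proof (induction n arbitrary: x y)
  case 0 then show ?case using g by simp
next
  case (Suc n)
  have "(msar_step s r \<theta> ^^ Suc n) g (x, y) = msar_step s r \<theta> ((msar_step s r \<theta> ^^ n) g) (x, y)" by simp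
  also have "\<dots> \<le> msar_step s r \<theta> (\<lambda>_. 1) (x, y)"
    by (rule step_mono) (use Suc in auto)
  also have "\<dots> = 1" using step_total[OF th Suc.prems(1)] .
  finally show ?case .
qed

lemma step_split:
  assumes s: "1 \<le> s" and th: "\<theta> \<in> theta_tilde" and x: "x \<in> {1,2}" and D: "D \<in> sets (state_space s)"
  shows "msar_step s r \<theta> (indicator D) (x, y) + msar_step s r \<theta> (indicator (space (state_space s) - D)) (x, y) = 1"
proof -
  let ?n = "\<lambda>x' z. ennreal (normal_density (ar_mean s \<theta> x' y) (ms_sigma \<theta> x') z)"
  have Dc: "space (state_space s) - D \<in> sets (state_space s)" using D by auto
  have im: "\<And>x'. x' \<in> {1,2} \<Longrightarrow> (\<lambda>z. ?n x' z * indicator A (x', Defs.shift s y z)) \<in> borel_measurable lborel"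
    if "A \<in> sets (state_space s)" for A
  proof -
    fix x' :: nat assume x': "x' \<in> {1,2}"
    have [measurable]: "(\<lambda>z. indicator A (x', Defs.shift s y z) :: ennreal) \<in> borel_measurable lborel"
      using comp_shift_meas[OF s _ x', of "indicator A"] that by simp
    show "(\<lambda>z. ?n x' z * indicator A (x', Defs.shift s y z)) \<in> borel_measurable lborel" by measurable
  qed
  have one: "(\<integral>\<^sup>+ z. ?n x' z * indicator D (x', Defs.shift s y z) \<partial>lborel) +
             (\<integral>\<^sup>+ z. ?n x' z * indicator (space (state_space s) - D) (x', Defs.shift s y z) \<partial>lborel) = 1"
    if x': "x' \<in> {1,2}" for x' :: nat
  proof -
    have "(\<integral>\<^sup>+ z. ?n x' z * indicator D (x', Defs.shift s y z) \<partial>lborel) +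
             (\<integral>\<^sup>+ z. ?n x' z * indicator (space (state_space s) - D) (x', Defs.shift s y z) \<partial>lborel)
        = (\<integral>\<^sup>+ z. ?n x' z * indicator D (x', Defs.shift s y z) + ?n x' z * indicator (space (state_space s) - D) (x', Defs.shift s y z) \<partial>lborel)"
      using im[OF D x'] im[OF Dc x'] by (intro nn_integral_add[symmetric]) auto
    also have "\<dots> = (\<integral>\<^sup>+ z. ?n x' z \<partial>lborel)"
    proof (intro nn_integral_cong)
      fix z
      have "Defs.shift s y z \<in> space (Rs s)" using measurable_space[OF shift_meas1[OF s]] by simp
      then have "(x', Defs.shift s y z) \<in> space (state_space s)" using x' by (simp add: space_state)
      then show "?n x' z * indicator D (x', Defs.shift s y z) + ?n x' z * indicator (space (state_space s) - D) (x', Defs.shift s y z) = ?n x' z"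
        by (auto simp: indicator_def)
    qed
    also have "\<dots> = 1" using th x' unfolding theta_tilde_def by (intro normal_int1) auto
    finally show ?thesis .
  qed
  have "msar_step s r \<theta> (indicator D) (x, y) + msar_step s r \<theta> (indicator (space (state_space s) - D)) (x, y)
      = (\<Sum>x'\<in>{1,2}. ennreal (trans_prob s r \<theta> x x' y) *
          ((\<integral>\<^sup>+ z. ?n x' z * indicator D (x', Defs.shift s y z) \<partial>lborel) +
             (\<integral>\<^sup>+ z. ?n x' z * indicator (space (state_space s) - D) (x', Defs.shift s y z) \<partial>lborel)))"
    unfolding msar_step_def by (simp add: distrib_left sum.distrib)
  also have "\<dots> = (\<Sum>x'\<in>{1,2::nat}. ennreal (trans_prob s r \<theta> x x' y))"
    using one by (intro sum.cong) auto
  also have "\<dots> = 1" by (rule trans_sum[OF th x])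
  finally show ?thesis .
qed

lemma cyc:
  assumes s: "1 \<le> s" and th: "\<theta> \<in> theta_tilde" and d: "d \<ge> 2"
    and Dm: "\<forall>i<d. D i \<in> sets (state_space s)"
    and hyp: "\<forall>i<d. \<forall>x\<in>D i. msar_Pn s r \<theta> 1 (D (Suc i mod d)) x = 1"
  shows "\<forall>i<d. \<forall>p\<in>D i. E \<inter> D ((i + n) mod d) = {} \<longrightarrow> msar_Pn s r \<theta> n E p = 0"
proof (induction n)
  case 0
  show ?case unfolding msar_Pn_def by (auto simp: indicator_def)
next
  case (Suc n)
  show ?case
  proof (intro allI impI ballI)
    fix i p assume i: "i < d" and p: "p \<in> D i" and E: "E \<inter> D ((i + Suc n) mod d) = {}"
    obtain x y where pxy: "p = (x, y)" by (cases p)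
    have psp: "p \<in> space (state_space s)" using p Dm i sets.sets_into_space by blast
    then have x: "x \<in> {1,2}" using pxy by (simp add: space_state)
    define j where "j = Suc i mod d"
    have j: "j < d" using d by (simp add: j_def)
    have Ej: "E \<inter> D ((j + n) mod d) = {}" using E by (simp add: j_def mod_add_left_eq)
    have IH: "\<forall>q\<in>D j. msar_Pn s r \<theta> n E q = 0" using Suc j Ej by blast
    have Djm: "D j \<in> sets (state_space s)" using Dm j by blast
    have h1: "msar_step s r \<theta> (indicator (D j)) (x, y) = 1"
      using hyp i p pxy unfolding msar_Pn_def j_def by simp
    have h0: "msar_step s r \<theta> (indicator (space (state_space s) - D j)) (x, y) = 0"
      using step_split[OF s th x Djm, of r y] h1 by (simp add: ennreal_add_left_cancel[of 1 _ 0, simplified])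
    have "msar_Pn s r \<theta> (Suc n) E p = msar_step s r \<theta> (msar_Pn s r \<theta> n E) (x, y)"
      unfolding msar_Pn_def pxy by simp
    also have "\<dots> \<le> msar_step s r \<theta> (indicator (space (state_space s) - D j)) (x, y)"
    proof (rule step_mono)
      fix x' :: nat and z assume x': "x' \<in> {1,2}"
      have "Defs.shift s y z \<in> space (Rs s)" using measurable_space[OF shift_meas1[OF s]] by simp
      then have q: "(x', Defs.shift s y z) \<in> space (state_space s)" using x' by (simp add: space_state)
      show "msar_Pn s r \<theta> n E (x', Defs.shift s y z) \<le> indicator (space (state_space s) - D j) (x', Defs.shift s y z)"
      proof (cases "(x', Defs.shift s y z) \<in> D j")
        case True then show ?thesis using IH by simp
      next
        case False
        have "msar_Pn s r \<theta> n E (x', Defs.shift s y z) \<le> 1"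
          unfolding msar_Pn_def by (rule Pn_le1[OF th _ x']) (simp add: indicator_def)
        then show ?thesis using False q by simp
      qed
    qed
    also have "\<dots> = 0" by (rule h0)
    finally show "msar_Pn s r \<theta> (Suc n) E p = 0" by simp
  qed
qed


lemma mod_Suc_neq: "(d::nat) \<ge> 2 \<Longrightarrow> m mod d \<noteq> Suc m mod d"
  by (simp add: mod_Suc)

theorem proposition1:
  fixes s r :: nat and \<theta> :: msar_param and N :: "(nat \<Rightarrow> real) \<Rightarrow> real"
  assumes "1 \<le> s" and "1 \<le> r" and "r \<le> s"
    and "\<theta> \<in> theta_tilde"
    and "is_norm_Rs s N"
  shows "psi_irreducible (msar_Pn s r \<theta>) (state_space s) (state_space s)
    \<and> (\<forall>R>0. \<exists>\<nu>s \<nu>s1.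
          equivalent_measures \<nu>s (state_space s) \<and> equivalent_measures \<nu>s1 (state_space s)
        \<and> small_set (msar_Pn s r \<theta>) (state_space s) s \<nu>s (ball_set s N R)
        \<and> small_set (msar_Pn s r \<theta>) (state_space s) (s + 1) \<nu>s1 (ball_set s N R))
    \<and> aperiodic (msar_Pn s r \<theta>) (state_space s) (state_space s)"
proof -
  note s = assms(1) and r = assms(2,3) and th = assms(4) and N = assms(5)
  let ?M = "state_space s"
  obtain e where e: "e > 0" and low: "\<forall>B\<ge>0. \<exists>K1>0. \<exists>K2>0. \<forall>x\<in>{1,2}. \<forall>y. L1 s y \<le> B \<longrightarrow> (\<forall>f\<in>borel_measurable (state_space s).
     (msar_step s r \<theta> ^^ s) f (x, y) \<ge> ennreal K1 * Jint s e f \<and> (msar_step s r \<theta> ^^ Suc s) f (x, y) \<ge> ennreal K2 * Jint s e f)"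
    using lower_sn[OF s r th] by blast
  obtain \<kappa> where \<kappa>: "\<kappa> > 0" and Nl: "\<forall>y\<in>space (Rs s). \<kappa> * L1 s y \<le> N y"
    using N_lower[OF N s] by blast
  have mu_sp: "emeasure ?M (space ?M) \<noteq> 0" using mu_space_pos[of s] by simp
  have small: "\<exists>\<nu>s \<nu>s1.
          equivalent_measures \<nu>s (state_space s) \<and> equivalent_measures \<nu>s1 (state_space s)
        \<and> small_set (msar_Pn s r \<theta>) (state_space s) s \<nu>s (ball_set s N R)
        \<and> small_set (msar_Pn s r \<theta>) (state_space s) (s + 1) \<nu>s1 (ball_set s N R)" if R: "R > 0" for R
  proof -
    have "R / \<kappa> \<ge> 0" using R \<kappa> by simp
    then obtain K1 K2 where K: "K1 > 0" "K2 > 0" and lowB: "\<forall>x\<in>{1,2}. \<forall>y. L1 s y \<le> R / \<kappa> \<longrightarrow> (\<forall>f\<in>borel_measurable (state_space s).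
     (msar_step s r \<theta> ^^ s) f (x, y) \<ge> ennreal K1 * Jint s e f \<and> (msar_step s r \<theta> ^^ Suc s) f (x, y) \<ge> ennreal K2 * Jint s e f)"
      using low by blast
    have eq1: "equivalent_measures (nuJ s e K1) ?M" using nuJ_equiv[OF K(1)] .
    have eq2: "equivalent_measures (nuJ s e K2) ?M" using nuJ_equiv[OF K(2)] .
    have sp: "emeasure (nuJ s e K) (space ?M) > 0" if "equivalent_measures (nuJ s e K) ?M" for K
      using that mu_sp unfolding equivalent_measures_def by (simp add: not_gr_zero[symmetric] del: not_gr_zero)
    have inball: "a \<in> {1,2} \<and> L1 s y \<le> R / \<kappa>" if "(a, y) \<in> ball_set s N R" for a y
    proof -
      have "a \<in> {1,2}" "y \<in> space (Rs s)" "N y \<le> R" using that by (auto simp: ball_set_def)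
      then have "\<kappa> * L1 s y \<le> R" using Nl by force
      then show ?thesis using \<open>a \<in> {1,2}\<close> \<kappa> by (simp add: field_simps)
    qed
    have ss1: "small_set (msar_Pn s r \<theta>) ?M s (nuJ s e K1) (ball_set s N R)"
      unfolding small_set_def
    proof (intro conjI ballI)
      show "ball_set s N R \<in> sets ?M" by (rule ball_set_meas[OF N])
      show "sets (nuJ s e K1) = sets ?M" by (simp add: nuJ_def)
      show "emeasure (nuJ s e K1) (space ?M) > 0" by (rule sp[OF eq1])
      fix p A assume p: "p \<in> ball_set s N R" and A: "A \<in> sets ?M"
      obtain a y where pa: "p = (a, y)" by (cases p)
      have ay: "a \<in> {1,2}" "L1 s y \<le> R / \<kappa>" using inball p pa by auto
      have "msar_Pn s r \<theta> s A p \<ge> ennreal K1 * Jint s e (indicator A)"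
        unfolding msar_Pn_def pa using lowB ay A by auto
      then show "msar_Pn s r \<theta> s A p \<ge> emeasure (nuJ s e K1) A"
        using nuJ_emeasure[of K1 A s e] K A by simp
    qed
    have ss2: "small_set (msar_Pn s r \<theta>) ?M (s + 1) (nuJ s e K2) (ball_set s N R)"
      unfolding small_set_def
    proof (intro conjI ballI)
      show "ball_set s N R \<in> sets ?M" by (rule ball_set_meas[OF N])
      show "sets (nuJ s e K2) = sets ?M" by (simp add: nuJ_def)
      show "emeasure (nuJ s e K2) (space ?M) > 0" by (rule sp[OF eq2])
      fix p A assume p: "p \<in> ball_set s N R" and A: "A \<in> sets ?M"
      obtain a y where pa: "p = (a, y)" by (cases p)
      have ay: "a \<in> {1,2}" "L1 s y \<le> R / \<kappa>" using inball p pa by auto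
      have "msar_Pn s r \<theta> (s + 1) A p \<ge> ennreal K2 * Jint s e (indicator A)"
        unfolding msar_Pn_def pa using lowB ay A by (auto simp del: funpow.simps)
      then show "msar_Pn s r \<theta> (s + 1) A p \<ge> emeasure (nuJ s e K2) A"
        using nuJ_emeasure[of K2 A s e] K A by simp
    qed
    show ?thesis using eq1 eq2 ss1 ss2 by blast
  qed
  have pos: "msar_Pn s r \<theta> s A p > 0 \<and> msar_Pn s r \<theta> (s + 1) A p > 0"
    if p: "p \<in> space ?M" and A: "A \<in> sets ?M" and mA: "emeasure ?M A > 0" for p A
  proof -
    obtain a y where pa: "p = (a, y)" by (cases p)
    have ay: "a \<in> {1,2}" "y \<in> space (Rs s)" using p pa by (auto simp: space_state)
    define R where "R = \<bar>N y\<bar> + 1"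
    have R: "R > 0" by (simp add: R_def)
    have pb: "p \<in> ball_set s N R" using ay pa by (auto simp: ball_set_def R_def)
    obtain \<nu>s \<nu>s1 where q: "equivalent_measures \<nu>s ?M" "equivalent_measures \<nu>s1 ?M"
      "small_set (msar_Pn s r \<theta>) ?M s \<nu>s (ball_set s N R)"
      "small_set (msar_Pn s r \<theta>) ?M (s + 1) \<nu>s1 (ball_set s N R)"
      using small[OF R] by blast
    have n0: "emeasure \<nu>s A \<noteq> 0" "emeasure \<nu>s1 A \<noteq> 0" using q(1,2) A mA unfolding equivalent_measures_def by auto
    have g0: "0 < emeasure \<nu>s A" "0 < emeasure \<nu>s1 A" using n0 by (simp_all add: zero_less_iff_neq_zero)
    have le: "msar_Pn s r \<theta> s A p \<ge> emeasure \<nu>s A" "msar_Pn s r \<theta> (s + 1) A p \<ge> emeasure \<nu>s1 A"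
      using q(3,4) pb A unfolding small_set_def by auto
    show ?thesis using order.strict_trans2[OF g0(1) le(1)] order.strict_trans2[OF g0(2) le(2)] by simp
  qed
  have irr: "psi_irreducible (msar_Pn s r \<theta>) ?M ?M"
    unfolding psi_irreducible_def using pos s by blast
  have ap: "aperiodic (msar_Pn s r \<theta>) ?M ?M"
    unfolding aperiodic_def
  proof
    assume "\<exists>d\<ge>2. \<exists>D :: nat \<Rightarrow> _ set.
      (\<forall>i<d. D i \<in> sets ?M) \<and> disjoint_family_on D {..<d} \<and>
      (\<forall>i<d. \<forall>x\<in>D i. msar_Pn s r \<theta> 1 (D (Suc i mod d)) x = 1) \<and>
      emeasure ?M (space ?M - (\<Union>i<d. D i)) = 0"
    then obtain d D where d: "d \<ge> 2" and Dm: "\<forall>i<d. D i \<in> sets ?M" and dj: "disjoint_family_on D {..<d}"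
      and hyp: "\<forall>i<d. \<forall>x\<in>D i. msar_Pn s r \<theta> 1 (D (Suc i mod d)) x = 1"
      and cov: "emeasure ?M (space ?M - (\<Union>i<d. D i)) = 0" by blast
    have "\<exists>i<d. D i \<noteq> {}"
    proof (rule ccontr)
      assume "\<not> (\<exists>i<d. D i \<noteq> {})"
      then have "(\<Union>i<d. D i) = {}" by auto
      then show False using cov mu_sp by simp
    qed
    then obtain i p where i: "i < d" and p: "p \<in> D i" by blast
    have psp: "p \<in> space ?M" using p Dm i sets.sets_into_space by blast
    have cy: "E \<inter> D ((i + n) mod d) = {} \<Longrightarrow> msar_Pn s r \<theta> n E p = 0" for n E
      using cyc[OF s th d Dm hyp, of E n] i p by blast
    define j1 where "j1 = (i + s) mod d"
    define j2 where "j2 = (i + (s + 1)) mod d"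
    have j: "j1 < d" "j2 < d" "j1 \<noteq> j2" using d mod_Suc_neq[OF d, of "i + s"] by (auto simp: j1_def j2_def)
    define E1 where "E1 = space ?M - D j1"
    define E2 where "E2 = space ?M - D j2"
    have E: "E1 \<in> sets ?M" "E2 \<in> sets ?M" using Dm j by (auto simp: E1_def E2_def)
    have "msar_Pn s r \<theta> s E1 p = 0" by (rule cy) (auto simp: E1_def j1_def)
    then have z1: "emeasure ?M E1 = 0" using pos[OF psp E(1)] by (auto simp: not_gr_zero[symmetric] simp del: not_gr_zero)
    have "msar_Pn s r \<theta> (s + 1) E2 p = 0" by (rule cy) (auto simp: E2_def j2_def)
    then have z2: "emeasure ?M E2 = 0" using pos[OF psp E(2)] by (auto simp: not_gr_zero[symmetric] simp del: not_gr_zero)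
    have "D j1 \<inter> D j2 = {}" using dj j unfolding disjoint_family_on_def by auto
    then have "space ?M \<subseteq> E1 \<union> E2" by (auto simp: E1_def E2_def)
    then have "emeasure ?M (space ?M) \<le> emeasure ?M (E1 \<union> E2)" using E by (intro emeasure_mono) auto
    also have "\<dots> \<le> emeasure ?M E1 + emeasure ?M E2" using E by (rule emeasure_subadditive)
    finally show False using z1 z2 mu_sp by simp
  qed
  show ?thesis using irr small ap by blast
qed


end
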